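(* In the setup of the context, for all $x,y,z\in B$: (a) $\gamma_{x,y,z}$ and $n_x$ do not depend on the choice of the balanced representations $\rho_\lambda$; more precisely, $\sum_\lambda f_\lambda^{-1}v^{3a_\lambda}\chi_\lambda(xyz)$ and $\sum_\lambda f_\lambda^{-1}v^{a_\lambda}\chi_\lambda(x^\ast)$ lie in $\mathcal{O}$ and $\gamma_{x,y,z}\equiv\sum_{\lambda\in\Lambda}f_\lambda^{-1}v^{3a_\lambda}\chi_\lambda(xyz)\pmod{\mathfrak m}$, $\ n_x\equiv\sum_{\lambda\in\Lambda}f_\lambda^{-1}v^{a_\lambda}\chi_\lambda(x^\ast)\pmod{\mathfrak m}$; (b) $\gamma_{x,y,z}=\gamma_{y,z,x}$; (c) $\sum_{z\in B}\gamma_{x^\ast,y,z}\,n_z=\delta_{xy}$; (d) $\gamma_{x,y,z}=\gamma_{y^\ast,x^\ast,z^\ast}$; (e) $n_x=n_{x^\ast}$.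
   Context: Setup: $\Gamma$ totally ordered abelian group; $K$ field with surjective valuation $\nu:K\to\Gamma\cup\{\infty\}$, valuation ring $\mathcal{O}$, maximal ideal $\mathfrak m$, residue field $F=\mathcal{O}/\mathfrak m$ which is formally real. $H$ a finite-dimensional split semisimple symmetric $K$-algebra with trace form $\tau$, $\ast$ a $K$-linear involutive antiautomorphism, $B$ a $\ast$-symmetric basis ($B^\ast=B$, $\tau(bc^\ast)=\delta_{bc}$). Simple modules indexed by $\Lambda$, characters $\chi_\lambda$, Schur elements $c_\lambda$ ($\tau=\sum c_\lambda^{-1}\chi_\lambda$), $a_\lambda:=-\tfrac12\nu(c_\lambda)$, which lies in $\Gamma$. Fix a partial section: a group homomorphism $\Gamma_0:=\langle a_\lambda\mid\lambda\in\Lambda\rangle\to K^\times$, $\gamma\mapsto v^\gamma$, with $\nu(v^\gamma)=\gamma$; put $f_\lambda:=v^{2a_\lambda}c_\lambda\in\mathcal{O}^\times$ (viewed in $F$ via reduction when appropriate). An irreducible matrix representation $\rho:H\to K^{d\times d}$ of type $\lambda$ is balanced if $\nu(\rho(b))\ge-a_\lambda$ for all $b$ in every $\ast$-symmetric basis. For each $\lambda$ choose a balanced $\rho_\lambda:H\to K^{d_\lambda\times d_\lambda}$ of type $\lambda$ and put $c^\lambda(x):=v^{a_\lambda}\rho_\lambda(x)\bmod\mathfrak m\in F^{d_\lambda\times d_\lambda}$. Define $\gamma_{x,y,z}:=\sum_\lambda\sum_{\mathfrak s,\mathfrak t,\mathfrak u}f_\lambda^{-1}c^\lambda(x)_{\mathfrak{st}}c^\lambda(y)_{\mathfrak{tu}}c^\lambda(z)_{\mathfrak{us}}\in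 F$ and $n_x:=\sum_\lambda\sum_{\mathfrak s}f_\lambda^{-1}c^\lambda(x^\ast)_{\mathfrak{ss}}\in F$. *)

theory Defs
  imports Main "Jordan_Normal_Form.Matrix"
begin

text \<open>A valuation nu : K -> Gamma \<union> {infinity} is encoded by its restriction to the
  nonzero elements of K; the value of 0 is infinity, i.e. larger than every element
  of Gamma.\<close>

definition is_surj_valuation :: "('k::field \<Rightarrow> 'g::linordered_ab_group_add) \<Rightarrow> bool" where
  "is_surj_valuation nu \<longleftrightarrow>
     (\<forall>x y. x \<noteq> 0 \<longrightarrow> y \<noteq> 0 \<longrightarrow> nu (x * y) = nu x + nu y) \<and>
     (\<forall>x y. x \<noteq> 0 \<longrightarrow> y \<noteq> 0 \<longrightarrow> x + y \<noteq> 0 \<longrightarrow> min (nu x) (nu y) \<le> nu (x + y)) \<and>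
     (\<forall>g. \<exists>x. x \<noteq> 0 \<and> nu x = g)"

definition val_ring :: "('k::field \<Rightarrow> 'g::linordered_ab_group_add) \<Rightarrow> 'k set" where
  "val_ring nu = {x. x = 0 \<or> 0 \<le> nu x}"

definition val_ideal :: "('k::field \<Rightarrow> 'g::linordered_ab_group_add) \<Rightarrow> 'k set" where
  "val_ideal nu = {x. x = 0 \<or> 0 < nu x}"

definition val_ge :: "('k::field \<Rightarrow> 'g::linordered_ab_group_add) \<Rightarrow> 'k \<Rightarrow> 'g \<Rightarrow> bool" where
  "val_ge nu x g \<longleftrightarrow> x = 0 \<or> g \<le> nu x"

text \<open>The residue field F = O/m is represented by a field type 'f together with the
  reduction map res : O -> F, a surjective ring homomorphism with kernel m
  (the values of res outside O are irrelevant).\<close>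
definition is_residue_map ::
  "('k::field \<Rightarrow> 'g::linordered_ab_group_add) \<Rightarrow> ('k \<Rightarrow> 'f::field) \<Rightarrow> bool" where
  "is_residue_map nu res \<longleftrightarrow>
     (\<forall>x\<in>val_ring nu. \<forall>y\<in>val_ring nu. res (x + y) = res x + res y \<and> res (x * y) = res x * res y) \<and>
     res 1 = 1 \<and>
     (\<forall>x\<in>val_ring nu. res x = 0 \<longleftrightarrow> x \<in> val_ideal nu) \<and>
     res ` val_ring nu = UNIV"

definition formally_real :: "'f::field itself \<Rightarrow> bool" where
  "formally_real TYPE('f) \<longleftrightarrow> (\<forall>xs::'f list. sum_list (map (\<lambda>x. x ^ 2) xs) \<noteq> - 1)"

definition is_K_algebra :: "('k::field \<Rightarrow> 'h::ring_1 \<Rightarrow> 'h) \<Rightarrow> bool" where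
  "is_K_algebra scale \<longleftrightarrow> vector_space scale \<and>
     (\<forall>a x y. scale a (x * y) = scale a x * y \<and> scale a (x * y) = x * scale a y)"

definition is_involution :: "('k::field \<Rightarrow> 'h::ring_1 \<Rightarrow> 'h) \<Rightarrow> ('h \<Rightarrow> 'h) \<Rightarrow> bool" where
  "is_involution scale star \<longleftrightarrow>
     (\<forall>x y. star (x + y) = star x + star y) \<and>
     (\<forall>a x. star (scale a x) = scale a (star x)) \<and>
     (\<forall>x y. star (x * y) = star y * star x) \<and>
     (\<forall>x. star (star x) = x)"

definition is_matrix_rep ::
  "('k::field \<Rightarrow> 'h::ring_1 \<Rightarrow> 'h) \<Rightarrow> nat \<Rightarrow> ('h \<Rightarrow> 'k mat) \<Rightarrow> bool" where
  "is_matrix_rep scale n rho \<longleftrightarrow>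
     (\<forall>x. rho x \<in> carrier_mat n n) \<and>
     (\<forall>x y. rho (x + y) = rho x + rho y) \<and>
     (\<forall>a x. rho (scale a x) = a \<cdot>\<^sub>m rho x) \<and>
     (\<forall>x y. rho (x * y) = rho x * rho y) \<and>
     rho 1 = 1\<^sub>m n"

text \<open>Split semisimple, with simple modules indexed by Lam: the representations
  sigma lam (of dimension d lam) of the (pairwise non-isomorphic) simple modules
  V_lam together induce an algebra isomorphism H = prod_lam K^(d_lam x d_lam)
  (Wedderburn decomposition).\<close>
definition is_split_semisimple_wedderburn ::
  "('k::field \<Rightarrow> 'h::ring_1 \<Rightarrow> 'h) \<Rightarrow> 'l set \<Rightarrow> ('l \<Rightarrow> nat) \<Rightarrow> ('l \<Rightarrow> 'h \<Rightarrow> 'k mat) \<Rightarrow> bool" where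
  "is_split_semisimple_wedderburn scale Lam d sigma \<longleftrightarrow>
     finite Lam \<and>
     (\<forall>lam\<in>Lam. 0 < d lam \<and> is_matrix_rep scale (d lam) (sigma lam)) \<and>
     (\<forall>x y. (\<forall>lam\<in>Lam. sigma lam x = sigma lam y) \<longrightarrow> x = y) \<and>
     (\<forall>M. (\<forall>lam\<in>Lam. M lam \<in> carrier_mat (d lam) (d lam)) \<longrightarrow>
          (\<exists>x. \<forall>lam\<in>Lam. sigma lam x = M lam))"

definition mat_trace :: "'a::comm_ring_1 mat \<Rightarrow> 'a" where
  "mat_trace M = (\<Sum>i<dim_row M. M $$ (i, i))"

definition character :: "('l \<Rightarrow> 'h \<Rightarrow> 'k::field mat) \<Rightarrow> 'l \<Rightarrow> 'h \<Rightarrow> 'k" where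
  "character sigma lam h = mat_trace (sigma lam h)"

definition is_symmetrizing_trace ::
  "('k::field \<Rightarrow> 'h::ring_1 \<Rightarrow> 'h) \<Rightarrow> ('h \<Rightarrow> 'k) \<Rightarrow> bool" where
  "is_symmetrizing_trace scale tau \<longleftrightarrow>
     (\<forall>x y. tau (x + y) = tau x + tau y) \<and>
     (\<forall>a x. tau (scale a x) = a * tau x) \<and>
     (\<forall>x y. tau (x * y) = tau (y * x)) \<and>
     (\<forall>x. (\<forall>y. tau (x * y) = 0) \<longrightarrow> x = 0)"

definition are_schur_elements ::
  "('h \<Rightarrow> 'k::field) \<Rightarrow> 'l set \<Rightarrow> ('l \<Rightarrow> 'h \<Rightarrow> 'k mat) \<Rightarrow> ('l \<Rightarrow> 'k) \<Rightarrow> bool" where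
  "are_schur_elements tau Lam sigma c \<longleftrightarrow>
     (\<forall>lam\<in>Lam. c lam \<noteq> 0) \<and>
     (\<forall>h. tau h = (\<Sum>lam\<in>Lam. inverse (c lam) * character sigma lam h))"

definition is_star_sym_basis ::
  "('k::field \<Rightarrow> 'h::ring_1 \<Rightarrow> 'h) \<Rightarrow> ('h \<Rightarrow> 'k) \<Rightarrow> ('h \<Rightarrow> 'h) \<Rightarrow> 'h set \<Rightarrow> bool" where
  "is_star_sym_basis scale tau star B \<longleftrightarrow>
     \<not> module.dependent scale B \<and> module.span scale B = UNIV \<and>
     star ` B = B \<and>
     (\<forall>b\<in>B. \<forall>c\<in>B. tau (b * star c) = (if b = c then 1 else 0))"

text \<open>Irreducible matrix representation of type lam: isomorphic to V_lam, i.e.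
  conjugate to sigma lam by an invertible matrix.\<close>
definition is_rep_of_type ::
  "('k::field \<Rightarrow> 'h::ring_1 \<Rightarrow> 'h) \<Rightarrow> ('l \<Rightarrow> nat) \<Rightarrow> ('l \<Rightarrow> 'h \<Rightarrow> 'k mat) \<Rightarrow> 'l \<Rightarrow> ('h \<Rightarrow> 'k mat) \<Rightarrow> bool" where
  "is_rep_of_type scale d sigma lam rho \<longleftrightarrow>
     is_matrix_rep scale (d lam) rho \<and>
     (\<exists>P Q. P \<in> carrier_mat (d lam) (d lam) \<and> Q \<in> carrier_mat (d lam) (d lam) \<and>
        P * Q = 1\<^sub>m (d lam) \<and> Q * P = 1\<^sub>m (d lam) \<and>
        (\<forall>h. rho h = P * sigma lam h * Q))"

text \<open>balanced: nu(rho(b)) >= -a_lam for all b in every star-symmetric basis, where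
  the valuation of a matrix is the minimum of the valuations of its entries.\<close>
definition is_balanced ::
  "('k::field \<Rightarrow> 'g::linordered_ab_group_add) \<Rightarrow> ('k \<Rightarrow> 'h::ring_1 \<Rightarrow> 'h) \<Rightarrow> ('h \<Rightarrow> 'k) \<Rightarrow>
   ('h \<Rightarrow> 'h) \<Rightarrow> ('l \<Rightarrow> nat) \<Rightarrow> ('l \<Rightarrow> 'h \<Rightarrow> 'k mat) \<Rightarrow> ('l \<Rightarrow> 'g) \<Rightarrow> 'l \<Rightarrow> ('h \<Rightarrow> 'k mat) \<Rightarrow> bool" where
  "is_balanced nu scale tau star d sigma a lam rho \<longleftrightarrow>
     is_rep_of_type scale d sigma lam rho \<and>
     (\<forall>B'. is_star_sym_basis scale tau star B' \<longrightarrow>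
        (\<forall>b\<in>B'. \<forall>i<d lam. \<forall>j<d lam. val_ge nu (rho b $$ (i, j)) (- a lam)))"

inductive_set gen_subgroup :: "'g::ab_group_add set \<Rightarrow> 'g set" for A where
  gen_zero: "0 \<in> gen_subgroup A"
| gen_base: "g \<in> A \<Longrightarrow> g \<in> gen_subgroup A"
| gen_add: "g \<in> gen_subgroup A \<Longrightarrow> h \<in> gen_subgroup A \<Longrightarrow> g + h \<in> gen_subgroup A"
| gen_uminus: "g \<in> gen_subgroup A \<Longrightarrow> - g \<in> gen_subgroup A"

definition is_partial_section ::
  "('k::field \<Rightarrow> 'g::linordered_ab_group_add) \<Rightarrow> 'g set \<Rightarrow> ('g \<Rightarrow> 'k) \<Rightarrow> bool" where
  "is_partial_section nu G0 v \<longleftrightarrow>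
     (\<forall>g\<in>G0. \<forall>h\<in>G0. v (g + h) = v g * v h) \<and>
     (\<forall>g\<in>G0. v g \<noteq> 0 \<and> nu (v g) = g)"

definition fcoef :: "('g::linordered_ab_group_add \<Rightarrow> 'k::field) \<Rightarrow> ('l \<Rightarrow> 'g) \<Rightarrow> ('l \<Rightarrow> 'k) \<Rightarrow> 'l \<Rightarrow> 'k" where
  "fcoef v a c lam = v (a lam + a lam) * c lam"

definition leadmat ::
  "('k::field \<Rightarrow> 'f::field) \<Rightarrow> ('g::linordered_ab_group_add \<Rightarrow> 'k) \<Rightarrow> ('l \<Rightarrow> 'g) \<Rightarrow>
   ('l \<Rightarrow> 'h \<Rightarrow> 'k mat) \<Rightarrow> 'l \<Rightarrow> 'h \<Rightarrow> 'f mat" where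
  "leadmat res v a rho lam x = map_mat res (v (a lam) \<cdot>\<^sub>m rho lam x)"

definition gamma_coef ::
  "('k::field \<Rightarrow> 'f::field) \<Rightarrow> ('g::linordered_ab_group_add \<Rightarrow> 'k) \<Rightarrow> ('l \<Rightarrow> 'g) \<Rightarrow> ('l \<Rightarrow> 'k) \<Rightarrow>
   'l set \<Rightarrow> ('l \<Rightarrow> nat) \<Rightarrow> ('l \<Rightarrow> 'h \<Rightarrow> 'k mat) \<Rightarrow> 'h \<Rightarrow> 'h \<Rightarrow> 'h \<Rightarrow> 'f" where
  "gamma_coef res v a c Lam d rho x y z =
     (\<Sum>lam\<in>Lam. \<Sum>s<d lam. \<Sum>t<d lam. \<Sum>u<d lam.
        inverse (res (fcoef v a c lam)) *
        leadmat res v a rho lam x $$ (s, t) *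
        leadmat res v a rho lam y $$ (t, u) *
        leadmat res v a rho lam z $$ (u, s))"

definition n_coef ::
  "('k::field \<Rightarrow> 'f::field) \<Rightarrow> ('g::linordered_ab_group_add \<Rightarrow> 'k) \<Rightarrow> ('l \<Rightarrow> 'g) \<Rightarrow> ('l \<Rightarrow> 'k) \<Rightarrow>
   'l set \<Rightarrow> ('l \<Rightarrow> nat) \<Rightarrow> ('l \<Rightarrow> 'h \<Rightarrow> 'k mat) \<Rightarrow> ('h \<Rightarrow> 'h) \<Rightarrow> 'h \<Rightarrow> 'f" where
  "n_coef res v a c Lam d rho star x =
     (\<Sum>lam\<in>Lam. \<Sum>s<d lam. inverse (res (fcoef v a c lam)) * leadmat res v a rho lam (star x) $$ (s, s))"

end

theory Submission
  imports Defs
begin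

locale mt7 =
  fixes nu :: "'k::field \<Rightarrow> 'g::linordered_ab_group_add"
    and res :: "'k \<Rightarrow> 'f::field"
    and scale :: "'k \<Rightarrow> 'h::ring_1 \<Rightarrow> 'h"
    and star :: "'h \<Rightarrow> 'h"
    and tau :: "'h \<Rightarrow> 'k"
    and B :: "'h set"
    and Lam :: "'l set"
    and d :: "'l \<Rightarrow> nat"
    and sigma :: "'l \<Rightarrow> 'h \<Rightarrow> 'k mat"
    and c :: "'l \<Rightarrow> 'k"
    and a :: "'l \<Rightarrow> 'g"
    and v :: "'g \<Rightarrow> 'k"
    and rho :: "'l \<Rightarrow> 'h \<Rightarrow> 'k mat"
  assumes val: "is_surj_valuation nu"
    and resid: "is_residue_map nu res"
    and freal: "formally_real TYPE('f)"
    and alg: "is_K_algebra scale"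
    and wedd: "is_split_semisimple_wedderburn scale Lam d sigma"
    and trace_form: "is_symmetrizing_trace scale tau"
    and inv: "is_involution scale star"
    and basis: "is_star_sym_basis scale tau star B"
    and schur: "are_schur_elements tau Lam sigma c"
    and a_def: "\<forall>lam\<in>Lam. a lam + a lam = - nu (c lam)"
    and sect: "is_partial_section nu (gen_subgroup (a ` Lam)) v"
    and bal: "\<forall>lam\<in>Lam. is_balanced nu scale tau star d sigma a lam (rho lam)"
begin

abbreviation "Ov \<equiv> val_ring nu"

lemma nu_mult: "x \<noteq> 0 \<Longrightarrow> y \<noteq> 0 \<Longrightarrow> nu (x * y) = nu x + nu y"
  using val unfolding is_surj_valuation_def by blast

lemma nu_add: "x \<noteq> 0 \<Longrightarrow> y \<noteq> 0 \<Longrightarrow> x + y \<noteq> 0 \<Longrightarrow> min (nu x) (nu y) \<le> nu (x + y)"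
  using val unfolding is_surj_valuation_def by blast

lemma nu_one: "nu 1 = 0"
  using nu_mult[of 1 1] by simp

lemma g_double_zero: "(g::'g) + g = 0 \<Longrightarrow> g = 0"
proof -
  assume h: "g + g = 0"
  show "g = 0"
  proof (cases "g < 0")
    case True then have "g + g < 0" using add_neg_neg by blast
    with h show ?thesis by simp
  next
    case False
    show ?thesis
    proof (rule ccontr)
      assume "g \<noteq> 0" with False have "0 < g" by simp
      then have "0 < g + g" using add_pos_pos by blast
      with h show False by simp
    qed
  qed
qed

lemma nu_minus_one: "nu (-1) = 0"
  using nu_mult[of "-1" "-1"] nu_one g_double_zero by simp

lemma O_iff: "x \<in> Ov \<longleftrightarrow> x = 0 \<or> 0 \<le> nu x"
  unfolding val_ring_def by simp

lemma O_zero[simp]: "0 \<in> Ov" and O_one[simp]: "1 \<in> Ov"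
  using nu_one unfolding val_ring_def by auto

lemma O_mult[intro]: "x \<in> Ov \<Longrightarrow> y \<in> Ov \<Longrightarrow> x * y \<in> Ov"
proof -
  assume x: "x \<in> Ov" and y: "y \<in> Ov"
  show ?thesis
  proof (cases "x = 0 \<or> y = 0")
    case True then show ?thesis unfolding val_ring_def by auto
  next
    case False
    then have "nu (x * y) = nu x + nu y" using nu_mult by blast
    moreover have "0 \<le> nu x" "0 \<le> nu y" using x y False unfolding val_ring_def by auto
    ultimately have "0 \<le> nu (x * y)" by simp
    then show ?thesis unfolding val_ring_def by simp
  qed
qed

lemma O_add[intro]: "x \<in> Ov \<Longrightarrow> y \<in> Ov \<Longrightarrow> x + y \<in> Ov"
proof -
  assume x: "x \<in> Ov" and y: "y \<in> Ov"
  show "x + y \<in> Ov"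
  proof (cases "x = 0 \<or> y = 0 \<or> x + y = 0")
    case True then show ?thesis using x y by auto
  next
    case False
    then have "min (nu x) (nu y) \<le> nu (x + y)" using nu_add by blast
    moreover have "0 \<le> min (nu x) (nu y)" using x y False unfolding val_ring_def by auto
    ultimately have "0 \<le> nu (x + y)" by (blast intro: order_trans)
    then show ?thesis unfolding val_ring_def by auto
  qed
qed

lemma O_uminus[intro]: "x \<in> Ov \<Longrightarrow> - x \<in> Ov"
proof -
  assume "x \<in> Ov"
  moreover have "-1 \<in> Ov" using nu_minus_one unfolding val_ring_def by auto
  ultimately have "(-1) * x \<in> Ov" by blast
  then show ?thesis by simp
qed

lemma O_diff[intro]: "x \<in> Ov \<Longrightarrow> y \<in> Ov \<Longrightarrow> x - y \<in> Ov"
  using O_add O_uminus by (metis diff_conv_add_uminus)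

lemma O_sum[intro]: "(\<And>i. i \<in> S \<Longrightarrow> g i \<in> Ov) \<Longrightarrow> sum g S \<in> Ov"
  by (induction S rule: infinite_finite_induct) auto

lemma O_of_nat[simp]: "of_nat n \<in> Ov"
  by (induction n) auto

lemma res_add: "x \<in> Ov \<Longrightarrow> y \<in> Ov \<Longrightarrow> res (x + y) = res x + res y"
  using resid unfolding is_residue_map_def by blast

lemma res_mult: "x \<in> Ov \<Longrightarrow> y \<in> Ov \<Longrightarrow> res (x * y) = res x * res y"
  using resid unfolding is_residue_map_def by blast

lemma res_one[simp]: "res 1 = 1"
  using resid unfolding is_residue_map_def by blast

lemma res_zero_iff: "x \<in> Ov \<Longrightarrow> res x = 0 \<longleftrightarrow> x \<in> val_ideal nu"
  using resid unfolding is_residue_map_def by blast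

lemma res_zero[simp]: "res 0 = 0"
proof -
  have "res 0 = res 0 + res 0" using res_add[of 0 0] by simp
  then show ?thesis by (metis add_cancel_left_right)
qed

lemma res_uminus: "x \<in> Ov \<Longrightarrow> res (- x) = - res x"
proof -
  assume x: "x \<in> Ov"
  have "res x + res (- x) = 0" using res_add[of x "-x"] x O_uminus by simp
  then show ?thesis by (metis neg_eq_iff_add_eq_0)
qed

lemma res_sum: "(\<And>i. i \<in> S \<Longrightarrow> g i \<in> Ov) \<Longrightarrow> res (sum g S) = (\<Sum>i\<in>S. res (g i))"
proof (induction S rule: infinite_finite_induct)
  case (insert x F)
  then show ?case by (simp add: res_add O_sum)
qed auto

lemma res_of_nat[simp]: "res (of_nat n) = of_nat n"
  by (induction n) (auto simp: res_add)

lemma unit_O: assumes "u \<noteq> 0" "nu u = 0"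
  shows "u \<in> Ov" "inverse u \<in> Ov" "res u \<noteq> 0" "res (inverse u) = inverse (res u)"
proof -
  show u: "u \<in> Ov" using assms unfolding val_ring_def by auto
  have "nu (u * inverse u) = nu u + nu (inverse u)" by (rule nu_mult) (use assms in auto)
  then have "nu (inverse u) = 0" using assms by (simp add: nu_one)
  then show iu: "inverse u \<in> Ov" unfolding val_ring_def by simp
  show r: "res u \<noteq> 0" using res_zero_iff[OF u] assms unfolding val_ideal_def by simp
  have "res u * res (inverse u) = 1" using res_mult[OF u iu] assms by simp
  then show "res (inverse u) = inverse (res u)" using r by (simp add: field_simps)
qed

lemma freal': "sum_list (map (\<lambda>x. x ^ 2) (xs::'f list)) \<noteq> - 1"
  using freal unfolding formally_real_def by blast

lemma sum_squares_zero:
  assumes "finite S" "(\<Sum>s\<in>S. g s * g s) = (0::'f)"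
  shows "\<forall>s\<in>S. g s = 0"
proof (rule ccontr)
  assume "\<not> (\<forall>s\<in>S. g s = 0)"
  then obtain s0 where s0: "s0 \<in> S" "g s0 \<noteq> 0" by blast
  obtain xs where xs: "set xs = S - {s0}" "distinct xs"
    using finite_distinct_list[of "S - {s0}"] assms(1) by blast
  have "(\<Sum>s\<in>S. g s * g s) = g s0 * g s0 + (\<Sum>s\<in>S - {s0}. g s * g s)"
    using assms(1) s0(1) by (simp add: sum.remove)
  then have e: "(\<Sum>s\<in>S - {s0}. g s * g s) = - (g s0 * g s0)" using assms(2)
    by (simp add: eq_neg_iff_add_eq_0 add.commute)
  have "(\<Sum>s\<in>S - {s0}. (g s / g s0) ^ 2) = (\<Sum>s\<in>S - {s0}. g s * g s) / (g s0 * g s0)"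
    by (simp add: sum_divide_distrib power2_eq_square)
  also have "\<dots> = -1" using e s0(2) by simp
  finally have "(\<Sum>s\<in>S - {s0}. (g s / g s0) ^ 2) = -1" .
  moreover have "sum_list (map (\<lambda>x. x ^ 2) (map (\<lambda>s. g s / g s0) xs)) = (\<Sum>s\<in>S - {s0}. (g s / g s0) ^ 2)"
    using xs by (simp add: sum_list_distinct_conv_sum_set o_def)
  ultimately show False using freal'[of "map (\<lambda>s. g s / g s0) xs"] by simp
qed

lemma of_nat_F_nonzero: "n > 0 \<Longrightarrow> (of_nat n :: 'f) \<noteq> 0"
proof
  assume "n > 0" "(of_nat n :: 'f) = 0"
  then obtain m where m: "n = Suc m" by (cases n) auto
  then have "(of_nat m :: 'f) + 1 = 0" using \<open>(of_nat n :: 'f) = 0\<close> by (simp add: add.commute)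
  then have "(of_nat m :: 'f) = -1" by (simp add: eq_neg_iff_add_eq_0)
  moreover have "sum_list (map (\<lambda>x. x ^ 2) (replicate m (1::'f))) = of_nat m"
    by (induction m) auto
  ultimately show False using freal'[of "replicate m 1"] by simp
qed

lemma of_nat_K_nonzero: "n > 0 \<Longrightarrow> (of_nat n :: 'k) \<noteq> 0"
  using of_nat_F_nonzero[of n] res_of_nat[of n] by force

end

lemma mult_entry:
  assumes "A \<in> carrier_mat n n" "B \<in> carrier_mat n n" "i < n" "j < n"
  shows "(A * B) $$ (i, j) = (\<Sum>k<n. A $$ (i, k) * B $$ (k, j))"
  using assms by (simp add: scalar_prod_def atLeast0LessThan)

lemma mat_trace_carrier: "A \<in> carrier_mat n n \<Longrightarrow> mat_trace A = (\<Sum>i<n. A $$ (i, i))"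
  unfolding mat_trace_def by simp

lemma mat_trace_comm:
  assumes "A \<in> carrier_mat n n" "B \<in> carrier_mat n n"
  shows "mat_trace (A * B) = mat_trace (B * A)"
proof -
  have AB: "A * B \<in> carrier_mat n n" "B * A \<in> carrier_mat n n" using assms by auto
  have "mat_trace (A * B) = (\<Sum>i<n. (A * B) $$ (i, i))" by (rule mat_trace_carrier[OF AB(1)])
  also have "\<dots> = (\<Sum>i<n. \<Sum>k<n. A $$ (i, k) * B $$ (k, i))"
    by (rule sum.cong) (auto simp: mult_entry[OF assms])
  also have "\<dots> = (\<Sum>k<n. \<Sum>i<n. B $$ (k, i) * A $$ (i, k))"
    by (subst sum.swap) (simp add: mult.commute)
  also have "\<dots> = (\<Sum>k<n. (B * A) $$ (k, k))"
    by (rule sum.cong) (auto simp: mult_entry[OF assms(2,1)])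
  also have "\<dots> = mat_trace (B * A)" by (rule mat_trace_carrier[OF AB(2), symmetric])
  finally show ?thesis .
qed

lemma mat_trace_zero[simp]: "mat_trace (0\<^sub>m n n) = 0"
  by (simp add: mat_trace_def)

lemma mat_trace_one[simp]: "mat_trace (1\<^sub>m n) = of_nat n"
  by (simp add: mat_trace_def)

definition um :: "nat \<Rightarrow> nat \<Rightarrow> nat \<Rightarrow> 'a::comm_ring_1 mat" where
  "um n i j = mat n n (\<lambda>(p, q). if p = i \<and> q = j then 1 else 0)"

lemma um_carrier[simp]: "um n i j \<in> carrier_mat n n"
  by (simp add: um_def)

lemma um_index[simp]: "p < n \<Longrightarrow> q < n \<Longrightarrow> um n i j $$ (p, q) = (if p = i \<and> q = j then 1 else 0)"
  by (simp add: um_def)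

lemma um_dims[simp]: "dim_row (um n i j) = n" "dim_col (um n i j) = n"
  by (simp_all add: um_def)

context mt7 begin

sublocale vs: vector_space scale
  using alg unfolding is_K_algebra_def by blast

lemma scale_mult_left: "scale k x * y = scale k (x * y)"
  and scale_mult_right: "x * scale k y = scale k (x * y)"
  using alg unfolding is_K_algebra_def by metis+

lemma star_add: "star (x + y) = star x + star y"
  and star_scale: "star (scale k x) = scale k (star x)"
  and star_mult: "star (x * y) = star y * star x"
  and star_star[simp]: "star (star x) = x"
  using inv unfolding is_involution_def by blast+

lemma star_one[simp]: "star 1 = 1"
proof -
  have "star 1 = star 1 * star (star 1)" by simp
  also have "\<dots> = star (star 1 * 1)" by (rule star_mult[symmetric])
  also have "\<dots> = 1" by simp
  finally show ?thesis .
qed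

lemma star_zero[simp]: "star 0 = 0"
  using star_add[of 0 0] by simp

lemma B_star: "star ` B = B"
  using basis unfolding is_star_sym_basis_def by blast

lemma star_in_B: "b \<in> B \<Longrightarrow> star b \<in> B"
  using B_star by blast

lemma B_dual: "b \<in> B \<Longrightarrow> b' \<in> B \<Longrightarrow> tau (b * star b') = (if b = b' then 1 else 0)"
  using basis unfolding is_star_sym_basis_def by blast

lemma B_indep: "vs.independent B" and B_span: "vs.span B = UNIV"
  using basis unfolding is_star_sym_basis_def by blast+

lemma tau_add: "tau (x + y) = tau x + tau y"
  and tau_scale: "tau (scale k x) = k * tau x"
  and tau_comm: "tau (x * y) = tau (y * x)"
  using trace_form unfolding is_symmetrizing_trace_def by blast+

lemma Lam_finite: "finite Lam"
  using wedd unfolding is_split_semisimple_wedderburn_def by blast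

lemma d_pos: "lam \<in> Lam \<Longrightarrow> 0 < d lam"
  using wedd unfolding is_split_semisimple_wedderburn_def by blast

lemma sig_rep: "lam \<in> Lam \<Longrightarrow> is_matrix_rep scale (d lam) (sigma lam)"
  using wedd unfolding is_split_semisimple_wedderburn_def by blast

lemma sig_carrier[simp]: "lam \<in> Lam \<Longrightarrow> sigma lam x \<in> carrier_mat (d lam) (d lam)"
  and sig_add: "lam \<in> Lam \<Longrightarrow> sigma lam (x + y) = sigma lam x + sigma lam y"
  and sig_scale: "lam \<in> Lam \<Longrightarrow> sigma lam (scale k x) = k \<cdot>\<^sub>m sigma lam x"
  and sig_mult: "lam \<in> Lam \<Longrightarrow> sigma lam (x * y) = sigma lam x * sigma lam y"
  and sig_one: "lam \<in> Lam \<Longrightarrow> sigma lam 1 = 1\<^sub>m (d lam)"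
  using sig_rep unfolding is_matrix_rep_def by blast+

lemma sig_dims[simp]: "lam \<in> Lam \<Longrightarrow> dim_row (sigma lam x) = d lam"
   "lam \<in> Lam \<Longrightarrow> dim_col (sigma lam x) = d lam"
  using sig_carrier by blast+

lemma sig_inj: "(\<And>lam. lam \<in> Lam \<Longrightarrow> sigma lam x = sigma lam y) \<Longrightarrow> x = y"
  using wedd unfolding is_split_semisimple_wedderburn_def by blast

lemma sig_surj: "(\<And>lam. lam \<in> Lam \<Longrightarrow> M lam \<in> carrier_mat (d lam) (d lam)) \<Longrightarrow>
   \<exists>x. \<forall>lam\<in>Lam. sigma lam x = M lam"
  using wedd unfolding is_split_semisimple_wedderburn_def by blast

lemma sig_entry_add: "lam \<in> Lam \<Longrightarrow> p < d lam \<Longrightarrow> q < d lam \<Longrightarrow>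
   sigma lam (x + y) $$ (p, q) = sigma lam x $$ (p, q) + sigma lam y $$ (p, q)"
  by (simp add: sig_add)

lemma sig_entry_scale: "lam \<in> Lam \<Longrightarrow> p < d lam \<Longrightarrow> q < d lam \<Longrightarrow>
   sigma lam (scale k x) $$ (p, q) = k * sigma lam x $$ (p, q)"
  by (simp add: sig_scale)

lemma c_nz: "lam \<in> Lam \<Longrightarrow> c lam \<noteq> 0"
  using schur unfolding are_schur_elements_def by blast

lemma tau_formula: "tau h = (\<Sum>lam\<in>Lam. inverse (c lam) * mat_trace (sigma lam h))"
  using schur unfolding are_schur_elements_def character_def by blast

definition lin :: "('h \<Rightarrow> 'k) \<Rightarrow> bool" where
  "lin L \<longleftrightarrow> (\<forall>x y. L (x + y) = L x + L y) \<and> (\<forall>k x. L (scale k x) = k * L x)"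

lemma lin_zero: "lin L \<Longrightarrow> L 0 = 0"
  unfolding lin_def by (metis add_cancel_left_right add_0)

lemma lin_sum: "lin L \<Longrightarrow> L (sum g S) = (\<Sum>i\<in>S. L (g i))"
proof (induction S rule: infinite_finite_induct)
  case (insert x F) then show ?case unfolding lin_def by simp
qed (auto simp: lin_zero)

lemma lin_scale_sum: "lin L \<Longrightarrow> L (\<Sum>i\<in>S. scale (f i) (g i)) = (\<Sum>i\<in>S. f i * L (g i))"
  by (simp add: lin_sum) (simp add: lin_def)

lemma lin_sig_entry: "lam \<in> Lam \<Longrightarrow> p < d lam \<Longrightarrow> q < d lam \<Longrightarrow> lin (\<lambda>h. sigma lam h $$ (p, q))"
  unfolding lin_def by (simp add: sig_entry_add sig_entry_scale)

lemma lin_tau_right: "lin (\<lambda>x. tau (x * w))"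
  unfolding lin_def by (simp add: distrib_right tau_add scale_mult_left tau_scale)

lemma lin_tau_left: "lin (\<lambda>x. tau (w * x))"
  unfolding lin_def by (simp add: distrib_left tau_add scale_mult_right tau_scale)

lemma lin_star: "lin L \<Longrightarrow> lin (\<lambda>x. L (star x))"
  unfolding lin_def by (simp add: star_add star_scale)

lemma lin_add: "lin L \<Longrightarrow> lin M \<Longrightarrow> lin (\<lambda>x. L x + M x)"
  unfolding lin_def by (simp add: algebra_simps)

lemma lin_cmult: "lin L \<Longrightarrow> lin (\<lambda>x. k * L x)"
  unfolding lin_def by (simp add: algebra_simps)

lemma lin_setsum: "(\<And>i. i \<in> S \<Longrightarrow> lin (L i)) \<Longrightarrow> lin (\<lambda>x. \<Sum>i\<in>S. L i x)"
  unfolding lin_def by (simp add: sum.distrib sum_distrib_left)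

lemma lin_trace_sig: "lam \<in> Lam \<Longrightarrow> lin (\<lambda>x. mat_trace (sigma lam x))"
proof -
  assume l: "lam \<in> Lam"
  have "lin (\<lambda>x. \<Sum>i<d lam. sigma lam x $$ (i, i))"
    by (rule lin_setsum) (use l lin_sig_entry in auto)
  moreover have "(\<lambda>x. mat_trace (sigma lam x)) = (\<lambda>x. \<Sum>i<d lam. sigma lam x $$ (i, i))"
    by (rule ext) (simp add: mat_trace_carrier[OF sig_carrier[OF l]])
  ultimately show ?thesis by simp
qed

lemma lin_chi_mult: "lam \<in> Lam \<Longrightarrow> lin (\<lambda>x. mat_trace (sigma lam (w * x)))"
proof -
  assume l: "lam \<in> Lam"
  show ?thesis using lin_trace_sig[OF l] unfolding lin_def
    by (simp add: distrib_left scale_mult_right)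
qed

definition comp :: "'l \<Rightarrow> 'k mat \<Rightarrow> 'h" where
  "comp lam A = (SOME x. \<forall>mu\<in>Lam. sigma mu x = (if mu = lam then A else 0\<^sub>m (d mu) (d mu)))"

lemma comp_sig:
  assumes "lam \<in> Lam" "A \<in> carrier_mat (d lam) (d lam)" "mu \<in> Lam"
  shows "sigma mu (comp lam A) = (if mu = lam then A else 0\<^sub>m (d mu) (d mu))"
proof -
  have "\<exists>x. \<forall>mu\<in>Lam. sigma mu x = (if mu = lam then A else 0\<^sub>m (d mu) (d mu))"
    by (rule sig_surj) (use assms in auto)
  then have "\<forall>mu\<in>Lam. sigma mu (comp lam A) = (if mu = lam then A else 0\<^sub>m (d mu) (d mu))"
    unfolding comp_def by (rule someI_ex)
  then show ?thesis using assms(3) by (rule bspec)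
qed

lemma tau_comp:
  assumes l: "lam \<in> Lam" and A: "A \<in> carrier_mat (d lam) (d lam)"
  shows "tau (comp lam A * h) = inverse (c lam) * mat_trace (A * sigma lam h)"
proof -
  have "tau (comp lam A * h) = (\<Sum>mu\<in>Lam. inverse (c mu) * mat_trace (sigma mu (comp lam A * h)))"
    by (rule tau_formula)
  also have "\<dots> = (\<Sum>mu\<in>Lam. if mu = lam then inverse (c lam) * mat_trace (A * sigma lam h) else 0)"
  proof (rule sum.cong[OF refl])
    fix mu assume mu: "mu \<in> Lam"
    have e: "sigma mu (comp lam A * h) = sigma mu (comp lam A) * sigma mu h" by (rule sig_mult[OF mu])
    show "inverse (c mu) * mat_trace (sigma mu (comp lam A * h)) =
      (if mu = lam then inverse (c lam) * mat_trace (A * sigma lam h) else 0)"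
    proof (cases "mu = lam")
      case True then show ?thesis using comp_sig[OF l A mu] e by simp
    next
      case False
      then have "sigma mu (comp lam A) * sigma mu h = 0\<^sub>m (d mu) (d mu)"
        using comp_sig[OF l A mu] sig_carrier[OF mu, of h] by simp
      then show ?thesis using False e by simp
    qed
  qed
  also have "\<dots> = inverse (c lam) * mat_trace (A * sigma lam h)"
    by (simp only: sum.delta[OF Lam_finite]) (simp add: l)
  finally show ?thesis .
qed

definition EU :: "'l \<Rightarrow> nat \<Rightarrow> nat \<Rightarrow> 'h" where
  "EU lam i j = comp lam (um (d lam) i j)"

definition Idx :: "('l \<times> nat \<times> nat) set" where
  "Idx = Sigma Lam (\<lambda>lam. {..<d lam} \<times> {..<d lam})"

lemma Idx_finite: "finite Idx"
  unfolding Idx_def by (rule finite_SigmaI) (use Lam_finite in auto)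

lemma EU_entry:
  assumes "lam \<in> Lam" "mu \<in> Lam" "p < d mu" "q < d mu"
  shows "sigma mu (EU lam i j) $$ (p, q) = (if mu = lam \<and> p = i \<and> q = j then 1 else 0)"
  using assms by (cases "mu = lam") (auto simp: EU_def comp_sig)

definition EUx :: "'l \<times> nat \<times> nat \<Rightarrow> 'h" where
  "EUx x = EU (fst x) (fst (snd x)) (snd (snd x))"

definition cf :: "'h \<Rightarrow> 'l \<times> nat \<times> nat \<Rightarrow> 'k" where
  "cf h x = sigma (fst x) h $$ (fst (snd x), snd (snd x))"

lemma expand_units: "h = (\<Sum>x\<in>Idx. scale (cf h x) (EUx x))"
  (is "h = ?R")
proof (rule sig_inj)
  fix mu assume mu: "mu \<in> Lam"
  show "sigma mu h = sigma mu ?R"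
  proof (rule eq_matI)
    fix p q assume pq: "p < dim_row (sigma mu ?R)" "q < dim_col (sigma mu ?R)"
    then have p: "p < d mu" and q: "q < d mu" using mu by auto
    have "sigma mu ?R $$ (p, q) = (\<Sum>x\<in>Idx. cf h x * sigma mu (EUx x) $$ (p, q))"
      by (rule lin_scale_sum[OF lin_sig_entry[OF mu p q]])
    also have "\<dots> = (\<Sum>x\<in>Idx. if x = (mu, p, q) then sigma mu h $$ (p, q) else 0)"
    proof (rule sum.cong[OF refl])
      fix x assume x: "x \<in> Idx"
      obtain l i j where xe: "x = (l, i, j)" by (cases x) auto
      have l: "l \<in> Lam" using x xe unfolding Idx_def by auto
      show "cf h x * sigma mu (EUx x) $$ (p, q) = (if x = (mu, p, q) then sigma mu h $$ (p, q) else 0)"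
        unfolding xe cf_def EUx_def using EU_entry[OF l mu p q, of i j] by auto
    qed
    also have "\<dots> = sigma mu h $$ (p, q)"
    proof -
      have "(mu, p, q) \<in> Idx" using mu p q unfolding Idx_def by auto
      then show ?thesis by (simp add: sum.delta[OF Idx_finite])
    qed
    finally show "sigma mu h $$ (p, q) = sigma mu ?R $$ (p, q)" by simp
  qed (use mu in auto)
qed

lemma B_finite: "finite B"
proof -
  have "B \<subseteq> vs.span (EUx ` Idx)"
  proof
    fix b assume "b \<in> B"
    have "(\<Sum>x\<in>Idx. scale (cf b x) (EUx x)) \<in> vs.span (EUx ` Idx)"
      by (intro vs.span_sum vs.span_scale vs.span_base) auto
    then show "b \<in> vs.span (EUx ` Idx)" using expand_units[of b] by simp
  qed
  moreover have "finite (EUx ` Idx)" using Idx_finite by simp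
  ultimately show ?thesis using vs.independent_span_bound[of "EUx ` Idx" B] B_indep by blast
qed

lemma expand_B: "h = (\<Sum>b\<in>B. scale (tau (h * star b)) b)"
proof -
  have "h \<in> vs.span B" using B_span by simp
  then obtain u where u: "h = (\<Sum>b\<in>B. scale (u b) b)"
    using vs.span_finite[OF B_finite] by auto
  have "tau (h * star c) = u c" if cB: "c \<in> B" for c
  proof -
    have "tau (h * star c) = (\<Sum>b\<in>B. u b * tau (b * star c))"
      using lin_scale_sum[OF lin_tau_right[of "star c"], of u "\<lambda>b. b" B] u by simp
    also have "\<dots> = (\<Sum>b\<in>B. if b = c then u c else 0)"
      by (rule sum.cong) (auto simp: B_dual cB)
    also have "\<dots> = u c" using B_finite cB by simp
    finally show ?thesis .
  qed
  then have "(\<Sum>b\<in>B. scale (tau (h * star b)) b) = (\<Sum>b\<in>B. scale (u b) b)"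
    by (intro sum.cong refl) simp
  then show ?thesis using u by simp
qed

lemma expand_lin: "lin L \<Longrightarrow> L h = (\<Sum>b\<in>B. tau (h * star b) * L b)"
proof -
  assume L: "lin L"
  have "L h = L (\<Sum>b\<in>B. scale (tau (h * star b)) b)"
    using expand_B[of h] by (rule arg_cong)
  also have "\<dots> = (\<Sum>b\<in>B. tau (h * star b) * L b)"
    by (rule lin_scale_sum[OF L])
  finally show ?thesis .
qed

end

context mt7 begin

abbreviation "G0 \<equiv> gen_subgroup (a ` Lam)"

lemma v_add: "g \<in> G0 \<Longrightarrow> h \<in> G0 \<Longrightarrow> v (g + h) = v g * v h"
  using sect unfolding is_partial_section_def by blast

lemma v_nz: "g \<in> G0 \<Longrightarrow> v g \<noteq> 0" and nu_v: "g \<in> G0 \<Longrightarrow> nu (v g) = g"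
  using sect unfolding is_partial_section_def by blast+

lemma a_G0: "lam \<in> Lam \<Longrightarrow> a lam \<in> G0"
  by (rule gen_subgroup.gen_base) simp

lemma aa_G0: "lam \<in> Lam \<Longrightarrow> a lam + a lam \<in> G0"
  by (rule gen_subgroup.gen_add; rule a_G0)

lemma v_aa: "lam \<in> Lam \<Longrightarrow> v (a lam + a lam) = v (a lam) * v (a lam)"
  by (simp add: v_add a_G0)

lemma v_aaa: "lam \<in> Lam \<Longrightarrow> v (a lam + a lam + a lam) = v (a lam) * v (a lam) * v (a lam)"
  by (simp add: v_add a_G0 aa_G0 v_aa)

lemma f_props:
  assumes l: "lam \<in> Lam"
  shows "fcoef v a c lam \<noteq> 0" "nu (fcoef v a c lam) = 0"
proof -
  show nz: "fcoef v a c lam \<noteq> 0" unfolding fcoef_def using v_nz[OF aa_G0[OF l]] c_nz[OF l] by simp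
  have "nu (fcoef v a c lam) = nu (v (a lam + a lam)) + nu (c lam)"
    unfolding fcoef_def by (rule nu_mult) (use v_nz[OF aa_G0[OF l]] c_nz[OF l] in auto)
  also have "\<dots> = 0" using nu_v[OF aa_G0[OF l]] a_def l by simp
  finally show "nu (fcoef v a c lam) = 0" .
qed

lemma invf_O: "lam \<in> Lam \<Longrightarrow> inverse (fcoef v a c lam) \<in> Ov"
  and res_invf: "lam \<in> Lam \<Longrightarrow> res (inverse (fcoef v a c lam)) = inverse (res (fcoef v a c lam))"
  and res_f_nz: "lam \<in> Lam \<Longrightarrow> res (fcoef v a c lam) \<noteq> 0"
  and f_O: "lam \<in> Lam \<Longrightarrow> fcoef v a c lam \<in> Ov"
  using unit_O[OF f_props] by blast+

lemma key_ident: "lam \<in> Lam \<Longrightarrow>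
  inverse (fcoef v a c lam) * v (a lam) * c lam * (inverse (fcoef v a c lam) * v (a lam + a lam + a lam))
   = inverse (c lam)"
proof -
  assume l: "lam \<in> Lam"
  have "v (a lam) \<noteq> 0" using v_nz[OF a_G0[OF l]] .
  then show ?thesis using c_nz[OF l] unfolding fcoef_def v_aaa[OF l] v_aa[OF l]
    by (simp add: field_simps)
qed

lemma rho_type: "lam \<in> Lam \<Longrightarrow> is_rep_of_type scale d sigma lam (rho lam)"
  and rho_bal0: "lam \<in> Lam \<Longrightarrow> b \<in> B \<Longrightarrow> i < d lam \<Longrightarrow> j < d lam \<Longrightarrow> val_ge nu (rho lam b $$ (i, j)) (- a lam)"
  using bal basis unfolding is_balanced_def by blast+

lemma rho_carrier[simp]: "lam \<in> Lam \<Longrightarrow> rho lam x \<in> carrier_mat (d lam) (d lam)"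
  and rho_mult: "lam \<in> Lam \<Longrightarrow> rho lam (x * y) = rho lam x * rho lam y"
  using rho_type unfolding is_rep_of_type_def is_matrix_rep_def by blast+

lemma rho_dims[simp]: "lam \<in> Lam \<Longrightarrow> dim_row (rho lam x) = d lam"
   "lam \<in> Lam \<Longrightarrow> dim_col (rho lam x) = d lam"
  using rho_carrier by blast+

definition Pm :: "'l \<Rightarrow> 'k mat" where
  "Pm lam = (SOME P. \<exists>Q. P \<in> carrier_mat (d lam) (d lam) \<and> Q \<in> carrier_mat (d lam) (d lam) \<and>
        P * Q = 1\<^sub>m (d lam) \<and> Q * P = 1\<^sub>m (d lam) \<and> (\<forall>h. rho lam h = P * sigma lam h * Q))"

definition Qm :: "'l \<Rightarrow> 'k mat" where
  "Qm lam = (SOME Q. Pm lam \<in> carrier_mat (d lam) (d lam) \<and> Q \<in> carrier_mat (d lam) (d lam) \<and>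
        Pm lam * Q = 1\<^sub>m (d lam) \<and> Q * Pm lam = 1\<^sub>m (d lam) \<and> (\<forall>h. rho lam h = Pm lam * sigma lam h * Q))"

lemma PQ:
  assumes l: "lam \<in> Lam"
  shows "Pm lam \<in> carrier_mat (d lam) (d lam)" "Qm lam \<in> carrier_mat (d lam) (d lam)"
    "Pm lam * Qm lam = 1\<^sub>m (d lam)" "Qm lam * Pm lam = 1\<^sub>m (d lam)"
    "rho lam h = Pm lam * sigma lam h * Qm lam"
proof -
  have ex: "\<exists>P Q. P \<in> carrier_mat (d lam) (d lam) \<and> Q \<in> carrier_mat (d lam) (d lam) \<and>
        P * Q = 1\<^sub>m (d lam) \<and> Q * P = 1\<^sub>m (d lam) \<and> (\<forall>h. rho lam h = P * sigma lam h * Q)"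
    using rho_type[OF l] unfolding is_rep_of_type_def by blast
  then have "\<exists>Q. Pm lam \<in> carrier_mat (d lam) (d lam) \<and> Q \<in> carrier_mat (d lam) (d lam) \<and>
        Pm lam * Q = 1\<^sub>m (d lam) \<and> Q * Pm lam = 1\<^sub>m (d lam) \<and> (\<forall>h. rho lam h = Pm lam * sigma lam h * Q)"
    unfolding Pm_def by (rule someI_ex)
  then have "Pm lam \<in> carrier_mat (d lam) (d lam) \<and> Qm lam \<in> carrier_mat (d lam) (d lam) \<and>
        Pm lam * Qm lam = 1\<^sub>m (d lam) \<and> Qm lam * Pm lam = 1\<^sub>m (d lam) \<and> (\<forall>h. rho lam h = Pm lam * sigma lam h * Qm lam)"
    unfolding Qm_def by (rule someI_ex)
  then show "Pm lam \<in> carrier_mat (d lam) (d lam)" "Qm lam \<in> carrier_mat (d lam) (d lam)"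
    "Pm lam * Qm lam = 1\<^sub>m (d lam)" "Qm lam * Pm lam = 1\<^sub>m (d lam)"
    "rho lam h = Pm lam * sigma lam h * Qm lam" by blast+
qed

lemma rho_trace: assumes l: "lam \<in> Lam" shows "mat_trace (rho lam h) = mat_trace (sigma lam h)"
proof -
  note PQ[OF l]
  have "mat_trace (rho lam h) = mat_trace (Pm lam * (sigma lam h * Qm lam))"
    using PQ(5)[OF l, of h] assoc_mult_mat[OF PQ(1)[OF l] sig_carrier[OF l] PQ(2)[OF l]] by simp
  also have "\<dots> = mat_trace ((sigma lam h * Qm lam) * Pm lam)"
    by (rule mat_trace_comm) (use PQ[OF l] l in auto)
  also have "\<dots> = mat_trace (sigma lam h * (Qm lam * Pm lam))"
    using assoc_mult_mat[OF sig_carrier[OF l] PQ(2)[OF l] PQ(1)[OF l]] by simp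
  also have "\<dots> = mat_trace (sigma lam h)"
    using PQ(4)[OF l] right_mult_one_mat[OF sig_carrier[OF l]] by simp
  finally show ?thesis .
qed

lemma rho_bal: assumes "lam \<in> Lam" "b \<in> B" "i < d lam" "j < d lam"
  shows "v (a lam) * rho lam b $$ (i, j) \<in> Ov"
proof (cases "rho lam b $$ (i, j) = 0")
  case False
  then have ge: "- a lam \<le> nu (rho lam b $$ (i, j))" using rho_bal0[OF assms] unfolding val_ge_def by simp
  have "nu (v (a lam) * rho lam b $$ (i, j)) = a lam + nu (rho lam b $$ (i, j))"
    using nu_mult[OF v_nz[OF a_G0[OF assms(1)]] False] nu_v[OF a_G0[OF assms(1)]] by simp
  moreover have "0 \<le> a lam + nu (rho lam b $$ (i, j))" using add_left_mono[OF ge, of "a lam"] by simp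
  ultimately show ?thesis unfolding val_ring_def by simp
qed simp

definition Gam :: "'h \<Rightarrow> 'h \<Rightarrow> 'h \<Rightarrow> 'k" where
  "Gam x y z = (\<Sum>lam\<in>Lam. inverse (fcoef v a c lam) * v (a lam + a lam + a lam)
          * character sigma lam (x * y * z))"

definition Nn :: "'h \<Rightarrow> 'k" where
  "Nn x = (\<Sum>lam\<in>Lam. inverse (fcoef v a c lam) * v (a lam) * character sigma lam (star x))"

lemma triple_trace:
  assumes X: "X \<in> carrier_mat n n" and Y: "Y \<in> carrier_mat n n" and Z: "Z \<in> carrier_mat n n"
  shows "(\<Sum>s<n. \<Sum>t<n. \<Sum>u<n. X $$ (s, t) * Y $$ (t, u) * Z $$ (u, s)) = mat_trace (X * (Y * Z))"
proof -
  have c: "X * (Y * Z) \<in> carrier_mat n n" "Y * Z \<in> carrier_mat n n" using assms by auto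
  have "mat_trace (X * (Y * Z)) = (\<Sum>s<n. (X * (Y * Z)) $$ (s, s))" by (rule mat_trace_carrier[OF c(1)])
  also have "\<dots> = (\<Sum>s<n. \<Sum>t<n. X $$ (s, t) * (Y * Z) $$ (t, s))"
    by (rule sum.cong) (auto simp: mult_entry[OF X c(2)])
  also have "\<dots> = (\<Sum>s<n. \<Sum>t<n. X $$ (s, t) * (\<Sum>u<n. Y $$ (t, u) * Z $$ (u, s)))"
    by (intro sum.cong refl) (auto simp: mult_entry[OF Y Z])
  also have "\<dots> = (\<Sum>s<n. \<Sum>t<n. \<Sum>u<n. X $$ (s, t) * Y $$ (t, u) * Z $$ (u, s))"
    by (simp add: sum_distrib_left mult.assoc)
  finally show ?thesis by simp
qed

lemma res_sum3: "(\<And>s t u. s \<in> S \<Longrightarrow> t \<in> T \<Longrightarrow> u \<in> U \<Longrightarrow> g s t u \<in> Ov) \<Longrightarrow>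
  res (\<Sum>s\<in>S. \<Sum>t\<in>T. \<Sum>u\<in>U. g s t u) = (\<Sum>s\<in>S. \<Sum>t\<in>T. \<Sum>u\<in>U. res (g s t u))"
proof -
  assume g: "\<And>s t u. s \<in> S \<Longrightarrow> t \<in> T \<Longrightarrow> u \<in> U \<Longrightarrow> g s t u \<in> Ov"
  have "res (\<Sum>s\<in>S. \<Sum>t\<in>T. \<Sum>u\<in>U. g s t u) = (\<Sum>s\<in>S. res (\<Sum>t\<in>T. \<Sum>u\<in>U. g s t u))"
    by (rule res_sum) (intro O_sum g)
  also have "\<dots> = (\<Sum>s\<in>S. \<Sum>t\<in>T. res (\<Sum>u\<in>U. g s t u))"
    by (intro sum.cong refl res_sum O_sum g)
  also have "\<dots> = (\<Sum>s\<in>S. \<Sum>t\<in>T. \<Sum>u\<in>U. res (g s t u))"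
    by (intro sum.cong refl res_sum g)
  finally show ?thesis .
qed

lemma gamma_lam:
  assumes l: "lam \<in> Lam" and xyz: "x \<in> B" "y \<in> B" "z \<in> B"
  shows "(\<Sum>s<d lam. \<Sum>t<d lam. \<Sum>u<d lam.
        inverse (res (fcoef v a c lam)) *
        leadmat res v a rho lam x $$ (s, t) *
        leadmat res v a rho lam y $$ (t, u) *
        leadmat res v a rho lam z $$ (u, s)) =
     res (inverse (fcoef v a c lam) * v (a lam + a lam + a lam) * character sigma lam (x * y * z))"
    "inverse (fcoef v a c lam) * v (a lam + a lam + a lam) * character sigma lam (x * y * z) \<in> Ov"
proof -
  define vv where "vv = v (a lam)"
  define ff where "ff = inverse (fcoef v a c lam)"
  define X where "X s t = vv * rho lam x $$ (s, t)" for s t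
  define Y where "Y s t = vv * rho lam y $$ (s, t)" for s t
  define Z where "Z s t = vv * rho lam z $$ (s, t)" for s t
  define g where "g s t u = ff * X s t * Y t u * Z u s" for s t u
  have XO: "X s t \<in> Ov" "Y s t \<in> Ov" "Z s t \<in> Ov" if "s < d lam" "t < d lam" for s t
    unfolding X_def Y_def Z_def vv_def using rho_bal[OF l _ that] xyz by auto
  have fO: "ff \<in> Ov" unfolding ff_def using invf_O[OF l] .
  have gO: "g s t u \<in> Ov" if "s < d lam" "t < d lam" "u < d lam" for s t u
    unfolding g_def using XO that fO by (intro O_mult) auto
  have pt: "inverse (res (fcoef v a c lam)) * leadmat res v a rho lam x $$ (s, t) *
        leadmat res v a rho lam y $$ (t, u) * leadmat res v a rho lam z $$ (u, s) = res (g s t u)"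
    if st: "s < d lam" "t < d lam" "u < d lam" for s t u
  proof -
    have "leadmat res v a rho lam x $$ (s, t) = res (X s t)"
      "leadmat res v a rho lam y $$ (t, u) = res (Y t u)"
      "leadmat res v a rho lam z $$ (u, s) = res (Z u s)"
      unfolding leadmat_def X_def Y_def Z_def vv_def using st l by auto
    moreover have "res (g s t u) = res ff * res (X s t) * res (Y t u) * res (Z u s)"
      unfolding g_def using XO[of s t] XO[of t u] XO[of u s] fO st
      by (simp add: res_mult O_mult)
    moreover have "res ff = inverse (res (fcoef v a c lam))" unfolding ff_def using res_invf[OF l] .
    ultimately show ?thesis by simp
  qed
  have L: "(\<Sum>s<d lam. \<Sum>t<d lam. \<Sum>u<d lam.
        inverse (res (fcoef v a c lam)) *
        leadmat res v a rho lam x $$ (s, t) *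
        leadmat res v a rho lam y $$ (t, u) *
        leadmat res v a rho lam z $$ (u, s)) = (\<Sum>s<d lam. \<Sum>t<d lam. \<Sum>u<d lam. res (g s t u))"
    by (intro sum.cong refl) (simp add: pt)
  have pt2: "g s t u = ff * (vv * vv * vv) * (rho lam x $$ (s, t) * rho lam y $$ (t, u) * rho lam z $$ (u, s))" for s t u
    unfolding g_def X_def Y_def Z_def by (simp only: mult_ac)
  have "(\<Sum>s<d lam. \<Sum>t<d lam. \<Sum>u<d lam. g s t u) =
     ff * (vv * vv * vv) * (\<Sum>s<d lam. \<Sum>t<d lam. \<Sum>u<d lam. rho lam x $$ (s, t) * rho lam y $$ (t, u) * rho lam z $$ (u, s))"
    unfolding pt2 by (simp only: sum_distrib_left)
  also have "(\<Sum>s<d lam. \<Sum>t<d lam. \<Sum>u<d lam. rho lam x $$ (s, t) * rho lam y $$ (t, u) * rho lam z $$ (u, s))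
     = mat_trace (rho lam x * (rho lam y * rho lam z))"
    by (rule triple_trace[OF rho_carrier[OF l] rho_carrier[OF l] rho_carrier[OF l]])
  also have "rho lam x * (rho lam y * rho lam z) = rho lam (x * y * z)"
    by (simp add: rho_mult[OF l] mult.assoc)
  also have "mat_trace (rho lam (x * y * z)) = character sigma lam (x * y * z)"
    unfolding character_def by (rule rho_trace[OF l])
  finally have R: "(\<Sum>s<d lam. \<Sum>t<d lam. \<Sum>u<d lam. g s t u) =
     inverse (fcoef v a c lam) * v (a lam + a lam + a lam) * character sigma lam (x * y * z)"
    using v_aaa[OF l] unfolding ff_def vv_def by simp
  have "res (\<Sum>s<d lam. \<Sum>t<d lam. \<Sum>u<d lam. g s t u) = (\<Sum>s<d lam. \<Sum>t<d lam. \<Sum>u<d lam. res (g s t u))"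
    by (rule res_sum3) (use gO in auto)
  then show "(\<Sum>s<d lam. \<Sum>t<d lam. \<Sum>u<d lam.
        inverse (res (fcoef v a c lam)) *
        leadmat res v a rho lam x $$ (s, t) *
        leadmat res v a rho lam y $$ (t, u) *
        leadmat res v a rho lam z $$ (u, s)) =
     res (inverse (fcoef v a c lam) * v (a lam + a lam + a lam) * character sigma lam (x * y * z))"
    using L R by simp
  have "(\<Sum>s<d lam. \<Sum>t<d lam. \<Sum>u<d lam. g s t u) \<in> Ov"
    by (intro O_sum) (use gO in auto)
  then show "inverse (fcoef v a c lam) * v (a lam + a lam + a lam) * character sigma lam (x * y * z) \<in> Ov"
    using R by simp
qed

lemma part_a_gamma:
  assumes xyz: "x \<in> B" "y \<in> B" "z \<in> B"
  shows "Gam x y z \<in> Ov" "gamma_coef res v a c Lam d rho x y z = res (Gam x y z)"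
proof -
  show "Gam x y z \<in> Ov" unfolding Gam_def using gamma_lam(2)[OF _ xyz] by blast
  show "gamma_coef res v a c Lam d rho x y z = res (Gam x y z)"
    unfolding Gam_def gamma_coef_def using gamma_lam[OF _ xyz] by (simp add: res_sum)
qed

lemma n_lam:
  assumes l: "lam \<in> Lam" and x: "x \<in> B"
  shows "(\<Sum>s<d lam. inverse (res (fcoef v a c lam)) * leadmat res v a rho lam (star x) $$ (s, s)) =
     res (inverse (fcoef v a c lam) * v (a lam) * character sigma lam (star x))"
    "inverse (fcoef v a c lam) * v (a lam) * character sigma lam (star x) \<in> Ov"
proof -
  let ?v = "v (a lam)" and ?f = "inverse (fcoef v a c lam)"
  have sx: "star x \<in> B" using star_in_B[OF x] .
  define g where "g s = ?f * (?v * rho lam (star x) $$ (s, s))" for s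
  have gO: "g s \<in> Ov" if "s < d lam" for s
    unfolding g_def using that rho_bal[OF l sx] invf_O[OF l] by blast
  have L: "(\<Sum>s<d lam. inverse (res (fcoef v a c lam)) * leadmat res v a rho lam (star x) $$ (s, s))
     = (\<Sum>s<d lam. res (g s))"
    unfolding g_def leadmat_def using l rho_bal[OF l sx] invf_O[OF l]
    by (intro sum.cong refl) (simp add: res_mult res_invf)
  have "(\<Sum>s<d lam. g s) = ?f * ?v * mat_trace (rho lam (star x))"
    unfolding g_def mat_trace_carrier[OF rho_carrier[OF l]] by (simp add: sum_distrib_left mult_ac)
  also have "\<dots> = ?f * ?v * character sigma lam (star x)"
    unfolding character_def using rho_trace[OF l] by simp
  finally have R: "(\<Sum>s<d lam. g s) = ?f * ?v * character sigma lam (star x)" .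
  show "(\<Sum>s<d lam. inverse (res (fcoef v a c lam)) * leadmat res v a rho lam (star x) $$ (s, s)) =
     res (inverse (fcoef v a c lam) * v (a lam) * character sigma lam (star x))"
  proof -
    have "res (sum g {..<d lam}) = (\<Sum>s<d lam. res (g s))" by (rule res_sum) (use gO in auto)
    then show ?thesis using L R by simp
  qed
  show "inverse (fcoef v a c lam) * v (a lam) * character sigma lam (star x) \<in> Ov"
    using R gO by (metis O_sum lessThan_iff)
qed

lemma part_a_n:
  assumes x: "x \<in> B"
  shows "Nn x \<in> Ov" "n_coef res v a c Lam d rho star x = res (Nn x)"
proof -
  show "Nn x \<in> Ov" unfolding Nn_def using n_lam(2)[OF _ x] by blast
  show "n_coef res v a c Lam d rho star x = res (Nn x)"
    unfolding Nn_def n_coef_def using n_lam[OF _ x] by (simp add: res_sum)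
qed

end

context mt7 begin

definition ee :: "'l \<Rightarrow> 'h" where "ee mu = comp mu (1\<^sub>m (d mu))"

lemma sig_ee: "mu \<in> Lam \<Longrightarrow> lam \<in> Lam \<Longrightarrow>
   sigma lam (ee mu) = (if lam = mu then 1\<^sub>m (d lam) else 0\<^sub>m (d lam) (d lam))"
  unfolding ee_def by (simp add: comp_sig)

lemma trace_mult_ee: assumes "mu \<in> Lam" "lam \<in> Lam"
  shows "mat_trace (sigma lam (w * ee mu)) = (if lam = mu then mat_trace (sigma lam w) else 0)"
proof (cases "lam = mu")
  case True then show ?thesis using assms by (simp add: sig_mult sig_ee right_mult_one_mat)
next
  case False
  have "sigma lam w * 0\<^sub>m (d lam) (d lam) = 0\<^sub>m (d lam) (d lam)" using assms by simp
  then show ?thesis using assms False by (simp add: sig_mult sig_ee)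
qed

lemma tau_ee: "mu \<in> Lam \<Longrightarrow> tau (ee mu * h) = inverse (c mu) * mat_trace (sigma mu h)"
  unfolding ee_def using tau_comp[of mu "1\<^sub>m (d mu)" h] by (simp add: left_mult_one_mat)

lemma lin_Gam: "lin (\<lambda>z. Gam w1 w2 z)"
  unfolding Gam_def character_def
  by (intro lin_setsum lin_cmult lin_chi_mult)

lemma Gam_ee: "mu \<in> Lam \<Longrightarrow> Gam w1 w2 (ee mu) =
   inverse (fcoef v a c mu) * v (a mu + a mu + a mu) * mat_trace (sigma mu (w1 * w2))"
proof -
  assume mu: "mu \<in> Lam"
  have "Gam w1 w2 (ee mu) = (\<Sum>lam\<in>Lam. if lam = mu then
       inverse (fcoef v a c mu) * v (a mu + a mu + a mu) * mat_trace (sigma mu (w1 * w2)) else 0)"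
    unfolding Gam_def character_def
    by (intro sum.cong refl) (simp add: trace_mult_ee[OF mu])
  also have "\<dots> = inverse (fcoef v a c mu) * v (a mu + a mu + a mu) * mat_trace (sigma mu (w1 * w2))"
    by (simp only: sum.delta[OF Lam_finite]) (simp add: mu)
  finally show ?thesis .
qed

lemma sum_chi_Gam: "mu \<in> Lam \<Longrightarrow>
  (\<Sum>z\<in>B. mat_trace (sigma mu (star z)) * Gam w1 w2 z) = c mu * Gam w1 w2 (ee mu)"
proof -
  assume mu: "mu \<in> Lam"
  have "Gam w1 w2 (ee mu) = (\<Sum>z\<in>B. tau (ee mu * star z) * Gam w1 w2 z)"
    by (rule expand_lin[OF lin_Gam])
  also have "\<dots> = inverse (c mu) * (\<Sum>z\<in>B. mat_trace (sigma mu (star z)) * Gam w1 w2 z)"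
    by (simp add: tau_ee[OF mu] sum_distrib_left mult.assoc)
  finally show ?thesis using c_nz[OF mu] by (simp add: field_simps)
qed

lemma part_c_K: assumes x: "x \<in> B" and y: "y \<in> B"
  shows "(\<Sum>z\<in>B. Gam (star x) y z * Nn z) = (if x = y then 1 else 0)"
proof -
  let ?k = "\<lambda>mu. inverse (fcoef v a c mu) * v (a mu)"
  have "(\<Sum>z\<in>B. Gam (star x) y z * Nn z) =
     (\<Sum>z\<in>B. \<Sum>mu\<in>Lam. ?k mu * (mat_trace (sigma mu (star z)) * Gam (star x) y z))"
    unfolding Nn_def character_def by (simp add: sum_distrib_left mult_ac)
  also have "\<dots> = (\<Sum>mu\<in>Lam. ?k mu * (\<Sum>z\<in>B. mat_trace (sigma mu (star z)) * Gam (star x) y z))"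
    by (subst sum.swap) (simp add: sum_distrib_left)
  also have "\<dots> = (\<Sum>mu\<in>Lam. (?k mu * c mu * (inverse (fcoef v a c mu) * v (a mu + a mu + a mu)))
        * mat_trace (sigma mu (star x * y)))"
    by (intro sum.cong refl) (simp add: sum_chi_Gam Gam_ee mult_ac)
  also have "\<dots> = (\<Sum>mu\<in>Lam. inverse (c mu) * mat_trace (sigma mu (star x * y)))"
    by (rule sum.cong[OF refl]) (simp only: key_ident)
  also have "\<dots> = tau (star x * y)" by (rule tau_formula[symmetric])
  also have "\<dots> = tau (y * star x)" by (rule tau_comm)
  also have "\<dots> = (if x = y then 1 else 0)" using B_dual[OF y x] by auto
  finally show ?thesis .
qed

lemma part_c: assumes x: "x \<in> B" and y: "y \<in> B"
  shows "(\<Sum>z'\<in>B. gamma_coef res v a c Lam d rho (star x) y z' * n_coef res v a c Lam d rho star z')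
        = (if x = y then 1 else 0)"
proof -
  have sx: "star x \<in> B" using star_in_B[OF x] .
  have "(\<Sum>z'\<in>B. gamma_coef res v a c Lam d rho (star x) y z' * n_coef res v a c Lam d rho star z')
     = (\<Sum>z\<in>B. res (Gam (star x) y z * Nn z))"
    by (intro sum.cong refl) (simp add: part_a_gamma[OF sx y] part_a_n res_mult)
  also have "\<dots> = res (\<Sum>z\<in>B. Gam (star x) y z * Nn z)"
    by (rule res_sum[symmetric]) (simp add: part_a_gamma[OF sx y] part_a_n O_mult)
  also have "\<dots> = (if x = y then 1 else 0)" using part_c_K[OF x y] by simp
  finally show ?thesis .
qed

end

lemma um_mult_right:
  assumes A: "A \<in> carrier_mat n n" and "i < n" "j < n" "p < n" "q < n"
  shows "(A * um n i j) $$ (p, q) = (if q = j then A $$ (p, i) else 0)"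
proof -
  have "(A * um n i j) $$ (p, q) = (\<Sum>k<n. A $$ (p, k) * um n i j $$ (k, q))"
    by (rule mult_entry[OF A um_carrier]) (use assms in auto)
  also have "\<dots> = (\<Sum>k<n. if k = i then (if q = j then A $$ (p, i) else 0) else 0)"
    by (rule sum.cong) (use assms in auto)
  also have "\<dots> = (if q = j then A $$ (p, i) else 0)" using assms by simp
  finally show ?thesis .
qed

lemma um_mult_left:
  assumes A: "A \<in> carrier_mat n n" and "i < n" "j < n" "p < n" "q < n"
  shows "(um n i j * A) $$ (p, q) = (if p = i then A $$ (j, q) else 0)"
proof -
  have "(um n i j * A) $$ (p, q) = (\<Sum>k<n. um n i j $$ (p, k) * A $$ (k, q))"
    by (rule mult_entry[OF um_carrier A]) (use assms in auto)
  also have "\<dots> = (\<Sum>k<n. if k = j then (if p = i then A $$ (j, q) else 0) else 0)"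
    by (rule sum.cong) (use assms in auto)
  also have "\<dots> = (if p = i then A $$ (j, q) else 0)" using assms by simp
  finally show ?thesis .
qed

lemma um_um:
  assumes "i < n" "j < n" "k < n" "l < n"
  shows "um n i j * um n k l = (if j = k then um n i l else 0\<^sub>m n n)"
proof (rule eq_matI)
  fix p q assume "p < dim_row (if j = k then um n i l else 0\<^sub>m n n)" "q < dim_col (if j = k then um n i l else 0\<^sub>m n n)"
  then have pq: "p < n" "q < n" by (auto split: if_splits)
  show "(um n i j * um n k l) $$ (p, q) = (if j = k then um n i l else 0\<^sub>m n n) $$ (p, q)"
    using um_mult_left[OF um_carrier assms(1,2) pq, of k l] assms pq by auto
qed auto

lemma trace_um:
  assumes M: "M \<in> carrier_mat n n" and "i < n" "j < n"
  shows "mat_trace (um n i j * M) = M $$ (j, i)"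
proof -
  have c: "um n i j * M \<in> carrier_mat n n" using M by auto
  have "mat_trace (um n i j * M) = (\<Sum>p<n. (um n i j * M) $$ (p, p))" by (rule mat_trace_carrier[OF c])
  also have "\<dots> = (\<Sum>p<n. if p = i then M $$ (j, i) else 0)"
    by (rule sum.cong) (use um_mult_left[OF M] assms in auto)
  also have "\<dots> = M $$ (j, i)" using assms by simp
  finally show ?thesis .
qed

context mt7 begin

lemma sig_zero: "lam \<in> Lam \<Longrightarrow> sigma lam 0 = 0\<^sub>m (d lam) (d lam)"
proof (rule eq_matI)
  fix p q assume l: "lam \<in> Lam" and pq: "p < dim_row (0\<^sub>m (d lam) (d lam))" "q < dim_col (0\<^sub>m (d lam) (d lam))"
  then have "sigma lam (0 + 0) $$ (p, q) = sigma lam 0 $$ (p, q) + sigma lam 0 $$ (p, q)"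
    by (intro sig_entry_add) auto
  then have "sigma lam 0 $$ (p, q) = 0" by (metis add_0 add_cancel_left_right)
  then show "sigma lam 0 $$ (p, q) = 0\<^sub>m (d lam) (d lam) $$ (p, q)" using pq by simp
qed auto

lemma rho_add: "lam \<in> Lam \<Longrightarrow> rho lam (x + y) = rho lam x + rho lam y"
  and rho_scale: "lam \<in> Lam \<Longrightarrow> rho lam (scale k x) = k \<cdot>\<^sub>m rho lam x"
  using rho_type unfolding is_rep_of_type_def is_matrix_rep_def by blast+

lemma lin_rho_entry: "lam \<in> Lam \<Longrightarrow> p < d lam \<Longrightarrow> q < d lam \<Longrightarrow> lin (\<lambda>h. rho lam h $$ (p, q))"
  unfolding lin_def by (simp add: rho_add rho_scale)

lemma ee_central: "mu \<in> Lam \<Longrightarrow> ee mu * h = h * ee mu"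
proof (rule sig_inj)
  fix lam assume mu: "mu \<in> Lam" and l: "lam \<in> Lam"
  show "sigma lam (ee mu * h) = sigma lam (h * ee mu)"
    using l mu by (simp add: sig_mult sig_ee left_mult_one_mat right_mult_one_mat)
qed

lemma ee_idem: "mu \<in> Lam \<Longrightarrow> ee mu * ee mu = ee mu"
proof (rule sig_inj)
  fix lam assume mu: "mu \<in> Lam" and l: "lam \<in> Lam"
  show "sigma lam (ee mu * ee mu) = sigma lam (ee mu)"
    using l mu by (simp add: sig_mult sig_ee)
qed

lemma ee_comp: assumes l: "lam \<in> Lam" and A: "A \<in> carrier_mat (d lam) (d lam)"
  shows "ee lam * comp lam A = comp lam A"
proof (rule sig_inj)
  fix mu assume mu: "mu \<in> Lam"
  show "sigma mu (ee lam * comp lam A) = sigma mu (comp lam A)"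
    using l mu A by (simp add: sig_mult sig_ee comp_sig left_mult_one_mat)
qed

definition TT :: "'l \<Rightarrow> 'k mat" where "TT lam = sigma lam (star (ee lam))"

lemma TT_carrier: "lam \<in> Lam \<Longrightarrow> TT lam \<in> carrier_mat (d lam) (d lam)"
  unfolding TT_def by simp

lemma star_ee_comm: assumes l: "lam \<in> Lam" shows "star (ee lam) * u = u * star (ee lam)"
proof -
  have "star (ee lam) * u = star (star u * ee lam)" by (simp add: star_mult)
  also have "\<dots> = star (ee lam * star u)" by (simp add: ee_central[OF l])
  also have "\<dots> = u * star (ee lam)" by (simp add: star_mult)
  finally show ?thesis .
qed

lemma TT_comm: assumes l: "lam \<in> Lam" and U: "U \<in> carrier_mat (d lam) (d lam)"
  shows "TT lam * U = U * TT lam"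
proof -
  have "sigma lam (comp lam U) = U" using comp_sig[OF l U l] by simp
  moreover have "sigma lam (star (ee lam) * comp lam U) = sigma lam (comp lam U * star (ee lam))"
    by (simp add: star_ee_comm[OF l])
  ultimately show ?thesis unfolding TT_def by (simp add: sig_mult[OF l])
qed

lemma TT_idem: assumes l: "lam \<in> Lam" shows "TT lam * TT lam = TT lam"
proof -
  have "star (ee lam) * star (ee lam) = star (ee lam)"
    using ee_idem[OF l] by (metis star_mult)
  then show ?thesis unfolding TT_def by (metis sig_mult[OF l])
qed

lemma TT_scalar: assumes l: "lam \<in> Lam" and pq: "p < d lam" "q < d lam"
  shows "TT lam $$ (p, q) = (if p = q then TT lam $$ (0, 0) else 0)"
proof -
  have d0: "0 < d lam" using d_pos[OF l] .
  note T = TT_carrier[OF l]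
  show ?thesis
  proof (cases "p = q")
    case True
    have "(TT lam * um (d lam) p 0) $$ (p, 0) = (um (d lam) p 0 * TT lam) $$ (p, 0)"
      using TT_comm[OF l um_carrier] by simp
    then show ?thesis using True um_mult_right[OF T, of p 0 p 0] um_mult_left[OF T, of p 0 p 0] pq d0 by simp
  next
    case False
    have "(TT lam * um (d lam) q q) $$ (p, q) = (um (d lam) q q * TT lam) $$ (p, q)"
      using TT_comm[OF l um_carrier] by simp
    then show ?thesis using False um_mult_right[OF T, of q q p q] um_mult_left[OF T, of q q p q] pq by simp
  qed
qed

lemma TT_alpha_idem: assumes l: "lam \<in> Lam"
  shows "TT lam $$ (0, 0) * TT lam $$ (0, 0) = TT lam $$ (0, 0)"
proof -
  have d0: "0 < d lam" using d_pos[OF l] .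
  note T = TT_carrier[OF l]
  have "TT lam $$ (0, 0) = (TT lam * TT lam) $$ (0, 0)" using TT_idem[OF l] by simp
  also have "\<dots> = (\<Sum>k<d lam. TT lam $$ (0, k) * TT lam $$ (k, 0))" by (rule mult_entry[OF T T d0 d0])
  also have "\<dots> = (\<Sum>k<d lam. if k = 0 then TT lam $$ (0, 0) * TT lam $$ (0, 0) else 0)"
  proof (rule sum.cong[OF refl])
    fix k assume k: "k \<in> {..<d lam}"
    show "TT lam $$ (0, k) * TT lam $$ (k, 0) = (if k = 0 then TT lam $$ (0, 0) * TT lam $$ (0, 0) else 0)"
    proof (cases "k = 0")
      case False
      then have "TT lam $$ (0, k) = 0" using TT_scalar[OF l d0, of k] k by simp
      then show ?thesis using False by simp
    qed simp
  qed
  also have "\<dots> = TT lam $$ (0, 0) * TT lam $$ (0, 0)" using d0 by simp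
  finally show ?thesis by simp
qed

lemma sig_star_ee_mult: assumes l: "lam \<in> Lam"
  shows "sigma lam (star (ee lam * h)) = sigma lam (star h) * TT lam"
  unfolding TT_def by (simp add: star_mult sig_mult[OF l])

lemma alpha_nz: assumes l: "lam \<in> Lam" shows "TT lam $$ (0, 0) \<noteq> 0"
proof
  assume a0: "TT lam $$ (0, 0) = 0"
  have d0: "0 < d lam" using d_pos[OF l] .
  note T = TT_carrier[OF l]
  have T0: "TT lam = 0\<^sub>m (d lam) (d lam)"
  proof (rule eq_matI)
    fix p q assume "p < dim_row (0\<^sub>m (d lam) (d lam))" "q < dim_col (0\<^sub>m (d lam) (d lam))"
    then have pq: "p < d lam" "q < d lam" by auto
    then show "TT lam $$ (p, q) = 0\<^sub>m (d lam) (d lam) $$ (p, q)" using TT_scalar[OF l pq] a0 by simp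
  qed (use T in auto)
  define P where "P = Pm lam"
  define Q where "Q = Qm lam"
  define E where "E = (um (d lam) 0 0 :: 'k mat)"
  have P: "P \<in> carrier_mat (d lam) (d lam)" and Q: "Q \<in> carrier_mat (d lam) (d lam)"
    and PQ1: "P * Q = 1\<^sub>m (d lam)" and rhoPQ: "\<And>h. rho lam h = P * sigma lam h * Q"
    unfolding P_def Q_def using PQ[OF l] by auto
  have E: "E \<in> carrier_mat (d lam) (d lam)" unfolding E_def by simp
  define U0 where "U0 = Q * E * P"
  have U0: "U0 \<in> carrier_mat (d lam) (d lam)" unfolding U0_def using P Q E by auto
  define G where "G = comp lam U0"
  have sigG: "sigma lam G = U0" unfolding G_def using comp_sig[OF l U0 l] by simp
  have rhoG: "rho lam G = E"
  proof -
    have QE: "Q * E \<in> carrier_mat (d lam) (d lam)" using Q E by auto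
    have PQE: "P * (Q * E) \<in> carrier_mat (d lam) (d lam)" using P QE by auto
    have "rho lam G = P * ((Q * E) * P) * Q" using rhoPQ[of G] sigG U0_def by simp
    also have "P * ((Q * E) * P) = (P * (Q * E)) * P" using assoc_mult_mat[OF P QE P] by simp
    also have "P * (Q * E) = (P * Q) * E" using assoc_mult_mat[OF P Q E] by simp
    also have "(P * Q) * E = E" using PQ1 E by simp
    also have "E * P * Q = E * (P * Q)" using assoc_mult_mat[OF E P Q] .
    also have "\<dots> = E" using PQ1 E by simp
    finally show ?thesis .
  qed
  have tauG: "tau (G * h) = inverse (c lam) * rho lam h $$ (0, 0)" for h
  proof -
    have S: "sigma lam h \<in> carrier_mat (d lam) (d lam)" by (simp add: l)
    have EP: "E * P \<in> carrier_mat (d lam) (d lam)" using E P by auto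
    have EPS: "E * P * S' \<in> carrier_mat (d lam) (d lam)" if "S' \<in> carrier_mat (d lam) (d lam)" for S'
      using EP that by auto
    have "U0 * sigma lam h = Q * E * P * sigma lam h" unfolding U0_def ..
    also have "Q * E * P = Q * (E * P)" using assoc_mult_mat[OF Q E P] .
    also have "Q * (E * P) * sigma lam h = Q * (E * P * sigma lam h)" using assoc_mult_mat[OF Q EP S] .
    finally have "mat_trace (U0 * sigma lam h) = mat_trace (Q * (E * P * sigma lam h))" by simp
    also have "\<dots> = mat_trace ((E * P * sigma lam h) * Q)"
      by (rule mat_trace_comm[OF Q EPS[OF S]])
    also have "(E * P * sigma lam h) * Q = E * (P * sigma lam h * Q)"
    proof -
      have "(E * P * sigma lam h) * Q = E * P * (sigma lam h * Q)" using assoc_mult_mat[OF EP S Q] .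
      also have "\<dots> = E * (P * (sigma lam h * Q))" using assoc_mult_mat[OF E P, of "sigma lam h * Q" "d lam"] S Q by auto
      also have "P * (sigma lam h * Q) = P * sigma lam h * Q" using assoc_mult_mat[OF P S Q] by simp
      finally show ?thesis .
    qed
    also have "\<dots> = E * rho lam h" using rhoPQ[of h] by simp
    also have "mat_trace (E * rho lam h) = rho lam h $$ (0, 0)" unfolding E_def using trace_um[OF rho_carrier[OF l] d0 d0] .
    finally show ?thesis unfolding G_def using tau_comp[OF l U0] by simp
  qed
  have eeG: "ee lam * G = G" unfolding G_def by (rule ee_comp[OF l U0])
  have "sigma lam (star G) = sigma lam (star G) * TT lam"
    using sig_star_ee_mult[OF l, of G] eeG by simp
  then have "sigma lam (star G) = 0\<^sub>m (d lam) (d lam)" using T0 by (simp add: l)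
  then have rsG: "rho lam (star G) $$ (0, 0) = 0" using rhoPQ[of "star G"] P Q d0 by simp
  let ?X = "\<lambda>b. v (a lam) * rho lam (star b) $$ (0, 0)"
  let ?Y = "\<lambda>b. v (a lam) * rho lam b $$ (0, 0)"
  have XO: "?X b \<in> Ov" if "b \<in> B" for b using rho_bal[OF l star_in_B[OF that] d0 d0] .
  have YO: "?Y b \<in> Ov" if "b \<in> B" for b using rho_bal[OF l that d0 d0] .
  have L1: "lin (\<lambda>h. rho lam (star h) $$ (0, 0))" by (rule lin_star[OF lin_rho_entry[OF l d0 d0]])
  have L2: "lin (\<lambda>h. rho lam h $$ (0, 0))" by (rule lin_rho_entry[OF l d0 d0])
  have "rho lam (star G) $$ (0, 0) = (\<Sum>b\<in>B. tau (G * star b) * rho lam (star b) $$ (0, 0))"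
    by (rule expand_lin[OF L1])
  then have "0 = inverse (c lam) * (\<Sum>b\<in>B. rho lam (star b) $$ (0, 0) * rho lam (star b) $$ (0, 0))"
    using rsG by (simp add: tauG sum_distrib_left mult.assoc)
  then have S1: "(\<Sum>b\<in>B. rho lam (star b) $$ (0, 0) * rho lam (star b) $$ (0, 0)) = 0"
    using c_nz[OF l] by simp
  have "(\<Sum>b\<in>B. ?X b * ?X b) = v (a lam) * v (a lam) * (\<Sum>b\<in>B. rho lam (star b) $$ (0, 0) * rho lam (star b) $$ (0, 0))"
    by (simp add: sum_distrib_left mult_ac)
  then have "(\<Sum>b\<in>B. ?X b * ?X b) = 0" using S1 by simp
  then have "res (\<Sum>b\<in>B. ?X b * ?X b) = 0" by simp
  moreover have "res (\<Sum>b\<in>B. ?X b * ?X b) = (\<Sum>b\<in>B. res (?X b) * res (?X b))"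
    by (subst res_sum) (auto simp: XO res_mult O_mult)
  ultimately have "(\<Sum>b\<in>B. res (?X b) * res (?X b)) = 0" by simp
  then have RX: "\<forall>b\<in>B. res (?X b) = 0" using sum_squares_zero[OF B_finite, of "\<lambda>b. res (?X b)"] by simp
  have "rho lam G $$ (0, 0) = (\<Sum>b\<in>B. tau (G * star b) * rho lam b $$ (0, 0))"
    by (rule expand_lin[OF L2])
  then have "1 = inverse (c lam) * (\<Sum>b\<in>B. rho lam (star b) $$ (0, 0) * rho lam b $$ (0, 0))"
    using rhoG d0 unfolding E_def by (simp add: tauG sum_distrib_left mult.assoc)
  then have S2: "(\<Sum>b\<in>B. rho lam (star b) $$ (0, 0) * rho lam b $$ (0, 0)) = c lam"
    using c_nz[OF l] by (simp add: field_simps)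
  have "(\<Sum>b\<in>B. ?X b * ?Y b) = v (a lam) * v (a lam) * (\<Sum>b\<in>B. rho lam (star b) $$ (0, 0) * rho lam b $$ (0, 0))"
    by (simp add: sum_distrib_left mult_ac)
  also have "\<dots> = fcoef v a c lam" unfolding fcoef_def using S2 v_aa[OF l] by simp
  finally have "res (fcoef v a c lam) = res (\<Sum>b\<in>B. ?X b * ?Y b)" by simp
  also have "\<dots> = (\<Sum>b\<in>B. res (?X b) * res (?Y b))"
    by (subst res_sum) (auto simp: XO YO res_mult O_mult)
  also have "\<dots> = 0" using RX by simp
  finally show False using res_f_nz[OF l] by simp
qed

lemma TT_one: assumes l: "lam \<in> Lam" shows "TT lam = 1\<^sub>m (d lam)"
proof -
  have "TT lam $$ (0, 0) = 1"
    using TT_alpha_idem[OF l] alpha_nz[OF l] by (metis mult_cancel_right2)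
  show ?thesis
  proof (rule eq_matI)
    fix p q assume "p < dim_row (1\<^sub>m (d lam) :: 'k mat)" "q < dim_col (1\<^sub>m (d lam) :: 'k mat)"
    then have pq: "p < d lam" "q < d lam" by auto
    show "TT lam $$ (p, q) = 1\<^sub>m (d lam) $$ (p, q)" using TT_scalar[OF l pq] \<open>TT lam $$ (0, 0) = 1\<close> pq by simp
  qed (use TT_carrier[OF l] in auto)
qed

lemma sig_star_ee: assumes l: "lam \<in> Lam"
  shows "sigma lam (star h) = sigma lam (star (ee lam * h))"
  using sig_star_ee_mult[OF l, of h] TT_one[OF l] right_mult_one_mat[OF sig_carrier[OF l]] by simp

end

context mt7 begin

lemma EU_sig: assumes l: "lam \<in> Lam" and mu: "mu \<in> Lam" and ij: "i < d lam" "j < d lam"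
  shows "sigma mu (EU lam i j) = (if mu = lam then um (d lam) i j else 0\<^sub>m (d mu) (d mu))"
  unfolding EU_def using comp_sig[OF l um_carrier mu] by simp

lemma EU_mult: assumes l: "lam \<in> Lam" and ijkl: "i < d lam" "j < d lam" "k < d lam" "m < d lam"
  shows "EU lam i j * EU lam k m = (if j = k then EU lam i m else 0)"
proof (rule sig_inj)
  fix mu assume mu: "mu \<in> Lam"
  show "sigma mu (EU lam i j * EU lam k m) = sigma mu (if j = k then EU lam i m else 0)"
  proof (cases "mu = lam")
    case True
    then show ?thesis using ijkl l
      by (simp add: sig_mult EU_sig um_um sig_zero)
  next
    case False
    then show ?thesis using ijkl l mu
      by (simp add: sig_mult EU_sig sig_zero)
  qed
qed

definition psi :: "'l \<Rightarrow> 'h \<Rightarrow> 'k" where "psi lam h = mat_trace (sigma lam (star h))"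

lemma lin_psi: "lam \<in> Lam \<Longrightarrow> lin (psi lam)"
proof -
  assume l: "lam \<in> Lam"
  have "lin (\<lambda>h. mat_trace (sigma lam (star h)))" by (rule lin_star[OF lin_trace_sig[OF l]])
  then show ?thesis unfolding psi_def by (simp add: eta_contract_eq)
qed

lemma psi_comm: assumes l: "lam \<in> Lam" shows "psi lam (x * y) = psi lam (y * x)"
  unfolding psi_def star_mult sig_mult[OF l]
  by (rule mat_trace_comm) (use l in auto)

lemma psi_zero: "lam \<in> Lam \<Longrightarrow> psi lam 0 = 0"
  unfolding psi_def by (simp add: sig_zero)

lemma psi_EU: assumes l: "lam \<in> Lam" and ij: "i < d lam" "j < d lam"
  shows "psi lam (EU lam i j) = (if i = j then psi lam (EU lam 0 0) else 0)"
proof -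
  have d0: "0 < d lam" using d_pos[OF l] .
  have "psi lam (EU lam i j) = psi lam (EU lam i 0 * EU lam 0 j)"
    using EU_mult[OF l ij(1) d0 d0 ij(2)] by simp
  also have "\<dots> = psi lam (EU lam 0 j * EU lam i 0)" by (rule psi_comm[OF l])
  also have "\<dots> = psi lam (if j = i then EU lam 0 0 else 0)"
    using EU_mult[OF l d0 ij(2) ij(1) d0] by simp
  finally show ?thesis using psi_zero[OF l] by auto
qed

lemma delta2: fixes f :: "nat \<Rightarrow> nat \<Rightarrow> 'a::comm_ring_1" assumes "p < n" "q < n"
  shows "(\<Sum>i<n. \<Sum>j<n. f i j * (if p = i \<and> q = j then 1 else 0)) = f p q"
proof -
  have "(\<Sum>i<n. \<Sum>j<n. f i j * (if p = i \<and> q = j then 1 else 0)) = (\<Sum>i<n. if i = p then f p q else 0)"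
  proof (rule sum.cong[OF refl])
    fix i assume "i \<in> {..<n}"
    show "(\<Sum>j<n. f i j * (if p = i \<and> q = j then 1 else 0)) = (if i = p then f p q else 0)"
    proof (cases "i = p")
      case True
      have "(\<Sum>j<n. f i j * (if p = i \<and> q = j then 1 else 0)) = (\<Sum>j<n. if q = j then f p q else 0)"
        by (rule sum.cong) (use True in auto)
      also have "\<dots> = f p q" using assms by simp
      finally show ?thesis using True by simp
    next
      case False
      then show ?thesis by simp
    qed
  qed
  also have "\<dots> = f p q" using assms by simp
  finally show ?thesis .
qed

lemma expand_comp: assumes l: "lam \<in> Lam"
  shows "ee lam * h = (\<Sum>i<d lam. \<Sum>j<d lam. scale (sigma lam h $$ (i, j)) (EU lam i j))"
  (is "_ = ?R")
proof (rule sig_inj)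
  fix mu assume mu: "mu \<in> Lam"
  show "sigma mu (ee lam * h) = sigma mu ?R"
  proof (rule eq_matI)
    fix p q assume "p < dim_row (sigma mu ?R)" "q < dim_col (sigma mu ?R)"
    then have p: "p < d mu" and q: "q < d mu" using mu by auto
    have "sigma mu ?R $$ (p, q) = (\<Sum>i<d lam. \<Sum>j<d lam. sigma lam h $$ (i, j) * sigma mu (EU lam i j) $$ (p, q))"
      by (simp add: lin_sum[OF lin_sig_entry[OF mu p q]] sig_entry_scale[OF mu p q])
    also have "\<dots> = sigma mu (ee lam * h) $$ (p, q)"
    proof (cases "mu = lam")
      case True
      have "(\<Sum>i<d lam. \<Sum>j<d lam. sigma lam h $$ (i, j) * sigma mu (EU lam i j) $$ (p, q)) =
         (\<Sum>i<d lam. \<Sum>j<d lam. sigma lam h $$ (i, j) * (if p = i \<and> q = j then 1 else 0))"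
      proof (intro sum.cong refl)
        fix i j assume i: "i \<in> {..<d lam}" and j: "j \<in> {..<d lam}"
        have e: "sigma mu (EU lam i j) = um (d lam) i j"
          using EU_sig[OF l mu, of i j] i j True by simp
        have pl: "p < d lam" "q < d lam" using p q True by auto
        show "sigma lam h $$ (i, j) * sigma mu (EU lam i j) $$ (p, q) =
          sigma lam h $$ (i, j) * (if p = i \<and> q = j then 1 else 0)"
          unfolding e um_index[OF pl] by (rule refl)
      qed
      also have "\<dots> = sigma lam h $$ (p, q)" by (rule delta2) (use True p q in auto)
      also have "\<dots> = sigma mu (ee lam * h) $$ (p, q)"
        using True l by (simp add: sig_mult sig_ee left_mult_one_mat)
      finally show ?thesis .
    next
      case False
      have "(\<Sum>i<d lam. \<Sum>j<d lam. sigma lam h $$ (i, j) * sigma mu (EU lam i j) $$ (p, q)) = 0"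
      proof (intro sum.neutral ballI)
        fix i j assume i: "i \<in> {..<d lam}" and j: "j \<in> {..<d lam}"
        have e: "sigma mu (EU lam i j) = 0\<^sub>m (d mu) (d mu)"
          using EU_sig[OF l mu, of i j] i j False by simp
        show "sigma lam h $$ (i, j) * sigma mu (EU lam i j) $$ (p, q) = 0"
          unfolding e using p q by simp
      qed
      also have "\<dots> = sigma mu (ee lam * h) $$ (p, q)"
        using False l mu p q by (simp add: sig_mult sig_ee)
      finally show ?thesis .
    qed
    finally show "sigma mu (ee lam * h) $$ (p, q) = sigma mu ?R $$ (p, q)" by simp
  qed (use mu in auto)
qed

lemma psi_ee: assumes l: "lam \<in> Lam"
  shows "psi lam (ee lam * h) = psi lam (EU lam 0 0) * mat_trace (sigma lam h)"
proof -
  have "psi lam (ee lam * h) = (\<Sum>i<d lam. \<Sum>j<d lam. sigma lam h $$ (i, j) * psi lam (EU lam i j))"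
  proof -
    have ps: "psi lam (scale k w) = k * psi lam w" for k w using lin_psi[OF l] unfolding lin_def by blast
    show ?thesis unfolding expand_comp[OF l] by (simp add: lin_sum[OF lin_psi[OF l]] ps)
  qed
  also have "\<dots> = (\<Sum>i<d lam. \<Sum>j<d lam. (psi lam (EU lam 0 0) * sigma lam h $$ (i, j)) * (if i = j then 1 else 0))"
  proof (intro sum.cong refl)
    fix i j assume i: "i \<in> {..<d lam}" and j: "j \<in> {..<d lam}"
    have e: "psi lam (EU lam i j) = (if i = j then psi lam (EU lam 0 0) else 0)"
      using psi_EU[OF l, of i j] i j by simp
    show "sigma lam h $$ (i, j) * psi lam (EU lam i j) =
      psi lam (EU lam 0 0) * sigma lam h $$ (i, j) * (if i = j then 1 else 0)"
      unfolding e by simp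
  qed
  also have "\<dots> = (\<Sum>i<d lam. psi lam (EU lam 0 0) * sigma lam h $$ (i, i))"
  proof (rule sum.cong[OF refl])
    fix i assume i: "i \<in> {..<d lam}"
    show "(\<Sum>j<d lam. (psi lam (EU lam 0 0) * sigma lam h $$ (i, j)) * (if i = j then 1 else 0)) =
      psi lam (EU lam 0 0) * sigma lam h $$ (i, i)"
    proof -
      have "(\<Sum>j<d lam. (psi lam (EU lam 0 0) * sigma lam h $$ (i, j)) * (if i = j then 1 else 0)) =
        (\<Sum>j<d lam. if i = j then psi lam (EU lam 0 0) * sigma lam h $$ (i, i) else 0)"
        by (rule sum.cong) auto
      also have "\<dots> = psi lam (EU lam 0 0) * sigma lam h $$ (i, i)" using i by simp
      finally show ?thesis .
    qed
  qed
  also have "\<dots> = psi lam (EU lam 0 0) * mat_trace (sigma lam h)"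
    by (simp add: sum_distrib_left mat_trace_carrier[OF sig_carrier[OF l]])
  finally show ?thesis .
qed

lemma psi_beta: assumes l: "lam \<in> Lam" shows "psi lam (EU lam 0 0) = 1"
proof -
  have "psi lam (ee lam) = mat_trace (TT lam)" unfolding psi_def TT_def ..
  also have "\<dots> = of_nat (d lam)" using TT_one[OF l] by simp
  finally have e1: "psi lam (ee lam) = of_nat (d lam)" .
  have "psi lam (ee lam * 1) = psi lam (EU lam 0 0) * of_nat (d lam)"
    using psi_ee[OF l, of 1] by (simp add: sig_one[OF l])
  then have "of_nat (d lam) = psi lam (EU lam 0 0) * (of_nat (d lam) :: 'k)" using e1 by simp
  moreover have "(of_nat (d lam) :: 'k) \<noteq> 0" using of_nat_K_nonzero d_pos[OF l] by blast
  ultimately show ?thesis by simp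
qed

lemma chi_star: assumes l: "lam \<in> Lam"
  shows "character sigma lam (star h) = character sigma lam h"
proof -
  have "character sigma lam (star h) = mat_trace (sigma lam (star (ee lam * h)))"
    unfolding character_def using sig_star_ee[OF l] by simp
  also have "\<dots> = psi lam (ee lam * h)" unfolding psi_def ..
  also have "\<dots> = mat_trace (sigma lam h)" using psi_ee[OF l] psi_beta[OF l] by simp
  finally show ?thesis unfolding character_def .
qed

lemma chi_cyc: assumes l: "lam \<in> Lam"
  shows "character sigma lam (x * y * z) = character sigma lam (y * z * x)"
proof -
  have "character sigma lam (x * y * z) = mat_trace (sigma lam x * sigma lam (y * z))"
    unfolding character_def by (simp add: mult.assoc sig_mult[OF l])
  also have "\<dots> = mat_trace (sigma lam (y * z) * sigma lam x)"
    by (rule mat_trace_comm) (use l in auto)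
  also have "\<dots> = character sigma lam (y * z * x)"
    unfolding character_def by (simp add: sig_mult[OF l])
  finally show ?thesis .
qed

lemma main: assumes x: "x \<in> B" and y: "y \<in> B" and z: "z \<in> B"
  shows "((\<Sum>lam\<in>Lam. inverse (fcoef v a c lam) * v (a lam + a lam + a lam)
          * character sigma lam (x * y * z)) \<in> val_ring nu \<and>
      gamma_coef res v a c Lam d rho x y z =
        res (\<Sum>lam\<in>Lam. inverse (fcoef v a c lam) * v (a lam + a lam + a lam)
          * character sigma lam (x * y * z)) \<and>
      (\<Sum>lam\<in>Lam. inverse (fcoef v a c lam) * v (a lam) * character sigma lam (star x))
        \<in> val_ring nu \<and>
      n_coef res v a c Lam d rho star x =
        res (\<Sum>lam\<in>Lam. inverse (fcoef v a c lam) * v (a lam) * character sigma lam (star x))) \<and>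
     gamma_coef res v a c Lam d rho x y z = gamma_coef res v a c Lam d rho y z x \<and>
     (\<Sum>z'\<in>B. gamma_coef res v a c Lam d rho (star x) y z' * n_coef res v a c Lam d rho star z')
        = (if x = y then 1 else 0) \<and>
     gamma_coef res v a c Lam d rho x y z
        = gamma_coef res v a c Lam d rho (star y) (star x) (star z) \<and>
     n_coef res v a c Lam d rho star x = n_coef res v a c Lam d rho star (star x)"
proof -
  have sx: "star x \<in> B" and sy: "star y \<in> B" and sz: "star z \<in> B" using star_in_B x y z by auto
  have A: "Gam x y z \<in> Ov" "gamma_coef res v a c Lam d rho x y z = res (Gam x y z)"
    "Nn x \<in> Ov" "n_coef res v a c Lam d rho star x = res (Nn x)"
    using part_a_gamma[OF x y z] part_a_n[OF x] by auto
  have Bc: "Gam x y z = Gam y z x"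
    unfolding Gam_def
  proof (rule sum.cong[OF refl])
    fix lam assume l: "lam \<in> Lam"
    show "inverse (fcoef v a c lam) * v (a lam + a lam + a lam) * character sigma lam (x * y * z) =
      inverse (fcoef v a c lam) * v (a lam + a lam + a lam) * character sigma lam (y * z * x)"
      using chi_cyc[OF l, of x y z] by simp
  qed
  have Dc: "Gam x y z = Gam (star y) (star x) (star z)"
  proof -
    have "character sigma lam (star y * star x * star z) = character sigma lam (x * y * z)"
      if l: "lam \<in> Lam" for lam
    proof -
      have "star y * star x * star z = star (z * x * y)" by (simp add: star_mult mult.assoc)
      then have "character sigma lam (star y * star x * star z) = character sigma lam (z * x * y)"
        using chi_star[OF l] by simp
      also have "\<dots> = character sigma lam (x * y * z)" by (rule chi_cyc[OF l])
      finally show ?thesis .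
    qed
    then show ?thesis unfolding Gam_def by (intro sum.cong refl) simp
  qed
  have Ec: "Nn x = Nn (star x)"
    unfolding Nn_def by (intro sum.cong refl) (simp add: chi_star)
  have G1: "gamma_coef res v a c Lam d rho x y z = gamma_coef res v a c Lam d rho y z x"
    using A(2) part_a_gamma(2)[OF y z x] Bc by simp
  have G4: "gamma_coef res v a c Lam d rho x y z = gamma_coef res v a c Lam d rho (star y) (star x) (star z)"
    using A(2) part_a_gamma(2)[OF sy sx sz] Dc by simp
  have G5: "n_coef res v a c Lam d rho star x = n_coef res v a c Lam d rho star (star x)"
    using A(4) part_a_n(2)[OF sx] Ec by simp
  from A(1) A(2) A(3) A(4) G1 part_c[OF x y] G4 G5 show ?thesis
    unfolding Gam_def Nn_def by (intro conjI)
qed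

end


theorem mainTheorem7:
  fixes nu :: "'k::field \<Rightarrow> 'g::linordered_ab_group_add"
    and res :: "'k \<Rightarrow> 'f::field"
    and scale :: "'k \<Rightarrow> 'h::ring_1 \<Rightarrow> 'h"
    and star :: "'h \<Rightarrow> 'h"
    and tau :: "'h \<Rightarrow> 'k"
    and B :: "'h set"
    and Lam :: "'l set"
    and d :: "'l \<Rightarrow> nat"
    and sigma :: "'l \<Rightarrow> 'h \<Rightarrow> 'k mat"
    and c :: "'l \<Rightarrow> 'k"
    and a :: "'l \<Rightarrow> 'g"
    and v :: "'g \<Rightarrow> 'k"
    and rho :: "'l \<Rightarrow> 'h \<Rightarrow> 'k mat"
  assumes val: "is_surj_valuation nu"
    and resid: "is_residue_map nu res"
    and freal: "formally_real TYPE('f)"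
    and alg: "is_K_algebra scale"
    and wedd: "is_split_semisimple_wedderburn scale Lam d sigma"
    and trace_form: "is_symmetrizing_trace scale tau"
    and inv: "is_involution scale star"
    and basis: "is_star_sym_basis scale tau star B"
    and schur: "are_schur_elements tau Lam sigma c"
    and a_def: "\<forall>lam\<in>Lam. a lam + a lam = - nu (c lam)"
    and sect: "is_partial_section nu (gen_subgroup (a ` Lam)) v"
    and bal: "\<forall>lam\<in>Lam. is_balanced nu scale tau star d sigma a lam (rho lam)"
  shows "\<forall>x\<in>B. \<forall>y\<in>B. \<forall>z\<in>B.
     ((\<Sum>lam\<in>Lam. inverse (fcoef v a c lam) * v (a lam + a lam + a lam)
          * character sigma lam (x * y * z)) \<in> val_ring nu \<and>
      gamma_coef res v a c Lam d rho x y z =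
        res (\<Sum>lam\<in>Lam. inverse (fcoef v a c lam) * v (a lam + a lam + a lam)
          * character sigma lam (x * y * z)) \<and>
      (\<Sum>lam\<in>Lam. inverse (fcoef v a c lam) * v (a lam) * character sigma lam (star x))
        \<in> val_ring nu \<and>
      n_coef res v a c Lam d rho star x =
        res (\<Sum>lam\<in>Lam. inverse (fcoef v a c lam) * v (a lam) * character sigma lam (star x))) \<and>
     gamma_coef res v a c Lam d rho x y z = gamma_coef res v a c Lam d rho y z x \<and>
     (\<Sum>z'\<in>B. gamma_coef res v a c Lam d rho (star x) y z' * n_coef res v a c Lam d rho star z')
        = (if x = y then 1 else 0) \<and>
     gamma_coef res v a c Lam d rho x y z
        = gamma_coef res v a c Lam d rho (star y) (star x) (star z) \<and>
     n_coef res v a c Lam d rho star x = n_coef res v a c Lam d rho star (star x)"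
proof -
  interpret mt7 nu res scale star tau B Lam d sigma c a v rho
    unfolding mt7_def using assms by blast
  show ?thesis by (intro ballI main)
qed

end
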